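(* On $\mathbb{R}^4$ with coordinates $x,y,z,t$, let $h=h(\rho,t)$ be a smooth function on $(0,\infty)\times\mathbb{R}$ such that $0$ is a regular value of $h$, the level set $\{h=0\}$ is a connected curve meeting the $\rho$-axis in exactly one point $(\rho_0,0)$ with $\rho_0>0$, $h_t$ vanishes along $\{h=0\}$ only at $(\rho_0,0)$, and $\rho h_\rho-th_t>0$ along $\{h=0\}$. Set $H(x,y,z,t)=h(x^2+y^2+z^2,t)$, $M=\{H=0\}\subset\mathbb{R}^4$, and let $f\colon M\to\mathbb{R}$ be the restriction of $(x,y,z,t)\mapsto x^2+y^2$. If $h_{tt}(\rho_0,0)<0$, then $f$ is a Morse--Bott function on $M$.
   Context: This is the model for a contact connected sum: $\mathbb{R}^4$ carries $\omega=\mathrm{d} x\wedge\mathrm{d} y+\mathrm{d} z\wedge\mathrm{d} t$ and the Liouville vector field $\tfrac12x\partial_x+\tfrac12y\partial_y+2z\partial_z-t\partial_t$, which is transverse to $M$; the curve $\{h=0\}$ in the $(\rho,t)$-half-plane is U-shaped with vertex $(\rho_0,0)$, its two ends running along the lines $t=\pm1$ for large $\rho$. A Morse--Bott function is a smooth function whose critical set is a submanifold along which the Hessian is non-degenerate in transverse directions. *)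

theory Defs
  imports "HOL-Analysis.Analysis"
begin

fun iter_dderiv :: "('a::real_normed_vector \<Rightarrow> 'b::real_normed_vector) \<Rightarrow> 'a list \<Rightarrow> 'a \<Rightarrow> 'b" where
  "iter_dderiv f [] = f"
| "iter_dderiv f (v # vs) = (\<lambda>x. frechet_derivative (iter_dderiv f vs) (at x) v)"

text \<open>f is C-infinity on the open set S: all iterated derivatives exist (are Frechet
  differentiable) at every point of S. In finite dimensions this is exactly smoothness.\<close>
definition smooth_on :: "'a::euclidean_space set \<Rightarrow> ('a \<Rightarrow> 'b::real_normed_vector) \<Rightarrow> bool" where
  "smooth_on S f \<longleftrightarrow> open S \<and> (\<forall>vs. \<forall>x\<in>S. iter_dderiv f vs differentiable (at x))"

definition dirderiv :: "('a::real_normed_vector \<Rightarrow> 'b::real_normed_vector) \<Rightarrow> 'a \<Rightarrow> 'a \<Rightarrow> 'b" where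
  "dirderiv f v x = frechet_derivative f (at x) v"

definition dirderiv2 :: "('a::real_normed_vector \<Rightarrow> 'b::real_normed_vector) \<Rightarrow> 'a \<Rightarrow> 'a \<Rightarrow> 'a \<Rightarrow> 'b" where
  "dirderiv2 f v w x = frechet_derivative (\<lambda>y. frechet_derivative f (at y) v) (at x) w"

definition submanifold_chart ::
  "'a::euclidean_space set \<Rightarrow> 'a \<Rightarrow> 'a set \<Rightarrow> ('a \<Rightarrow> 'a) \<Rightarrow> 'a set \<Rightarrow> bool" where
  "submanifold_chart S p W \<Psi> L \<longleftrightarrow>
     open W \<and> p \<in> W \<and> inj_on \<Psi> W \<and> open (\<Psi> ` W) \<and>
     smooth_on W \<Psi> \<and> smooth_on (\<Psi> ` W) (inv_into W \<Psi>) \<and>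
     subspace L \<and> \<Psi> ` (S \<inter> W) = L \<inter> \<Psi> ` W"

definition embedded_submanifold :: "'a::euclidean_space set \<Rightarrow> bool" where
  "embedded_submanifold S \<longleftrightarrow> (\<forall>p\<in>S. \<exists>W \<Psi> L. submanifold_chart S p W \<Psi> L)"

text \<open>Tangent space (independent of the chart).\<close>
definition tangent_space :: "'a::euclidean_space set \<Rightarrow> 'a \<Rightarrow> 'a set" where
  "tangent_space S p = {v. \<exists>W \<Psi> L. submanifold_chart S p W \<Psi> L \<and> frechet_derivative \<Psi> (at p) v \<in> L}"

definition crit_set :: "('a::euclidean_space \<Rightarrow> real) \<Rightarrow> 'a set \<Rightarrow> 'a set" where
  "crit_set F M = {p \<in> M. \<forall>v\<in>tangent_space M p. frechet_derivative F (at p) v = 0}"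

definition morse_bott_on :: "'a::euclidean_space set \<Rightarrow> ('a \<Rightarrow> real) \<Rightarrow> bool" where
  "morse_bott_on M F \<longleftrightarrow>
     embedded_submanifold M \<and> embedded_submanifold (crit_set F M) \<and>
     (\<forall>p\<in>crit_set F M. \<forall>W \<Psi> L. submanifold_chart M p W \<Psi> L \<longrightarrow>
        (\<forall>v\<in>tangent_space M p.
           (\<forall>w\<in>tangent_space M p.
              dirderiv2 (F \<circ> inv_into W \<Psi>) (frechet_derivative \<Psi> (at p) v)
                 (frechet_derivative \<Psi> (at p) w) (\<Psi> p) = 0)
           \<longleftrightarrow> v \<in> tangent_space (crit_set F M) p))"

end

theory Submission
  imports Defs
begin


abbreviation fd :: "('a::real_normed_vector \<Rightarrow> 'b::real_normed_vector) \<Rightarrow> 'a \<Rightarrow> 'a \<Rightarrow> 'b" where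
  "fd f x \<equiv> frechet_derivative f (at x)"

fun Ck :: "nat \<Rightarrow> 'a::real_normed_vector set \<Rightarrow> ('a \<Rightarrow> 'b::real_normed_vector) \<Rightarrow> bool" where
  "Ck 0 S f = (\<forall>x\<in>S. f differentiable at x)"
| "Ck (Suc k) S f = ((\<forall>x\<in>S. f differentiable at x) \<and> (\<forall>v. Ck k S (\<lambda>x. fd f x v)))"

definition sm :: "'a::real_normed_vector set \<Rightarrow> ('a \<Rightarrow> 'b::real_normed_vector) \<Rightarrow> bool" where
  "sm S f \<longleftrightarrow> (\<forall>k. Ck k S f)"

lemma iter_dderiv_append:
  "iter_dderiv f (vs @ [v]) = iter_dderiv (\<lambda>x. fd f x v) vs"
proof (induction vs)
  case Nil
  then show ?case by simp
next
  case (Cons a vs)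
  have "iter_dderiv f ((a # vs) @ [v]) = (\<lambda>x. frechet_derivative (iter_dderiv f (vs @ [v])) (at x) a)"
    by simp
  also have "\<dots> = iter_dderiv (\<lambda>x. frechet_derivative f (at x) v) (a # vs)"
    by (simp only: Cons.IH iter_dderiv.simps)
  finally show ?case .
qed

lemma Ck_iff_iter:
  "Ck k S f \<longleftrightarrow> (\<forall>vs. length vs \<le> k \<longrightarrow> (\<forall>x\<in>S. iter_dderiv f vs differentiable at x))"
proof (induction k arbitrary: f)
  case 0
  then show ?case by auto
next
  case (Suc k)
  show ?case
  proof
    assume A: "Ck (Suc k) S f"
    show "\<forall>vs. length vs \<le> Suc k \<longrightarrow> (\<forall>x\<in>S. iter_dderiv f vs differentiable at x)"
    proof (intro allI impI)
      fix vs :: "'a list" assume "length vs \<le> Suc k"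
      then show "\<forall>x\<in>S. iter_dderiv f vs differentiable at x"
      proof (cases vs rule: rev_cases)
        case Nil then show ?thesis using A by auto
      next
        case (snoc ws v)
        then have "length ws \<le> k" using \<open>length vs \<le> Suc k\<close> by auto
        moreover have "Ck k S (\<lambda>x. fd f x v)" using A by auto
        ultimately show ?thesis using Suc.IH snoc by (simp add: iter_dderiv_append)
      qed
    qed
  next
    assume B: "\<forall>vs. length vs \<le> Suc k \<longrightarrow> (\<forall>x\<in>S. iter_dderiv f vs differentiable at x)"
    have "\<forall>x\<in>S. f differentiable at x" using B[rule_format, of "[]"] by auto
    moreover have "Ck k S (\<lambda>x. fd f x v)" for v
    proof -
      have "\<forall>ws. length ws \<le> k \<longrightarrow> (\<forall>x\<in>S. iter_dderiv (\<lambda>x. fd f x v) ws differentiable at x)"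
        using B[rule_format, of "_ @ [v]"] by (auto simp: iter_dderiv_append)
      then show ?thesis using Suc.IH by blast
    qed
    ultimately show "Ck (Suc k) S f" by simp
  qed
qed

lemma smooth_on_sm: "smooth_on S f \<longleftrightarrow> open S \<and> sm S f"
  unfolding smooth_on_def sm_def Ck_iff_iter by auto

lemma Ck_diff: "Ck k S f \<Longrightarrow> x \<in> S \<Longrightarrow> f differentiable at x"
  by (cases k) auto

lemma Ck_Suc_mono: "Ck (Suc k) S f \<Longrightarrow> Ck k S f"
  by (induction k arbitrary: f) auto

lemma Ck_mono: "k \<le> m \<Longrightarrow> Ck m S f \<Longrightarrow> Ck k S f"
  by (induction m rule: dec_induct) (use Ck_Suc_mono in blast)+

lemma Ck_deriv: "Ck (Suc k) S f \<Longrightarrow> Ck k S (\<lambda>x. fd f x v)"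
  by simp

lemma sm_deriv: "sm S f \<Longrightarrow> sm S (\<lambda>x. fd f x v)"
  unfolding sm_def by (metis Ck.simps(2))

lemma sm_Ck: "sm S f \<Longrightarrow> Ck k S f"
  unfolding sm_def by auto

lemma sm_diff: "sm S f \<Longrightarrow> x \<in> S \<Longrightarrow> f differentiable at x"
  using Ck_diff sm_Ck by blast

lemma diff_cong:
  assumes "f differentiable at x" "open S" "x \<in> S" "\<And>y. y \<in> S \<Longrightarrow> f y = g y"
  shows "g differentiable at x"
proof -
  obtain D where "(f has_derivative D) (at x)" using assms(1) by (auto simp: differentiable_def)
  then have "(g has_derivative D) (at x)"
    using has_derivative_transform_within_open assms(2-4) by blast
  then show ?thesis by (auto simp: differentiable_def)
qed

lemma diff_inverse:
  fixes f :: "'a::real_normed_vector \<Rightarrow> real"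
  assumes "f differentiable at x" "f x \<noteq> 0"
  shows "(\<lambda>x. inverse (f x)) differentiable at x"
proof -
  obtain D where "(f has_derivative D) (at x)" using assms(1) by (auto simp: differentiable_def)
  from Deriv.has_derivative_inverse[OF assms(2) this] show ?thesis by (auto simp: differentiable_def)
qed

lemma Ck_cong:
  assumes "open S" "\<And>x. x \<in> S \<Longrightarrow> f x = g x" "Ck k S f"
  shows "Ck k S g"
  using assms(2,3)
proof (induction k arbitrary: f g)
  case 0
  then show ?case
    using assms(1) diff_cong by (metis Ck.simps(1))
next
  case (Suc k)
  have d: "\<forall>x\<in>S. g differentiable at x"
    using Suc.prems assms(1) diff_cong by (metis Ck.simps(2))
  have "Ck k S (\<lambda>x. fd g x v)" for v
  proof (rule Suc.IH[of "\<lambda>x. fd f x v"])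
    show "Ck k S (\<lambda>x. fd f x v)" using Suc.prems by auto
    fix x assume "x \<in> S"
    then show "fd f x v = fd g x v"
      using frechet_derivative_transform_within_open[of f x S g] Suc.prems assms(1) by auto
  qed
  then show ?case using d by simp
qed

lemma sm_cong: "open S \<Longrightarrow> (\<And>x. x \<in> S \<Longrightarrow> f x = g x) \<Longrightarrow> sm S f \<Longrightarrow> sm S g"
  unfolding sm_def using Ck_cong by blast

lemma fd_at: "(f has_derivative f') (at x) \<Longrightarrow> fd f x = f'"
  using frechet_derivative_at by metis

lemma Ck_const: "Ck k S (\<lambda>x. c)"
  by (induction k arbitrary: c) auto

lemma Ck_linear:
  assumes "bounded_linear f"
  shows "Ck k S f"
proof -
  have "fd f x = f" for x
    using assms by (intro fd_at) (rule bounded_linear_imp_has_derivative)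
  then show ?thesis
    using assms by (cases k) (auto simp: Ck_const bounded_linear_imp_differentiable)
qed

lemma Ck_add:
  assumes "open S" "Ck k S f" "Ck k S g"
  shows "Ck k S (\<lambda>x. f x + g x)"
  using assms(2,3)
proof (induction k arbitrary: f g)
  case 0
  then show ?case by auto
next
  case (Suc k)
  have "Ck k S (\<lambda>x. fd (\<lambda>x. f x + g x) x v)" for v
  proof (rule Ck_cong[OF assms(1)])
    show "Ck k S (\<lambda>x. fd f x v + fd g x v)" using Suc by auto
    fix x assume "x \<in> S"
    then have "((\<lambda>x. f x + g x) has_derivative (\<lambda>v. fd f x v + fd g x v)) (at x)"
      using Suc.prems by (intro has_derivative_add) (auto simp: frechet_derivative_works)
    then show "fd f x v + fd g x v = fd (\<lambda>x. f x + g x) x v" by (simp add: fd_at)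
  qed
  then show ?case using Suc.prems by auto
qed

lemma Ck_scaleR:
  fixes f :: "'a::real_normed_vector \<Rightarrow> real"
  assumes "open S" "Ck k S f" "Ck k S g"
  shows "Ck k S (\<lambda>x. f x *\<^sub>R g x)"
  using assms(2,3)
proof (induction k arbitrary: f g)
  case 0
  then show ?case by auto
next
  case (Suc k)
  have "Ck k S (\<lambda>x. fd (\<lambda>x. f x *\<^sub>R g x) x v)" for v
  proof (rule Ck_cong[OF assms(1)])
    have fk: "Ck k S f" "Ck k S g" using Ck_Suc_mono Suc.prems by blast+
    have "Ck k S (\<lambda>x. f x *\<^sub>R fd g x v)" using Suc.IH[OF fk(1)] Suc.prems(2) by simp
    moreover have "Ck k S (\<lambda>x. fd f x v *\<^sub>R g x)" using Suc.IH[OF _ fk(2)] Suc.prems(1) by simp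
    ultimately show "Ck k S (\<lambda>x. f x *\<^sub>R fd g x v + fd f x v *\<^sub>R g x)"
      by (intro Ck_add assms)
    fix x assume "x \<in> S"
    then have "((\<lambda>x. f x *\<^sub>R g x) has_derivative (\<lambda>v. f x *\<^sub>R fd g x v + fd f x v *\<^sub>R g x)) (at x)"
      using Suc.prems by (intro has_derivative_scaleR) (auto simp: frechet_derivative_works)
    then show "f x *\<^sub>R fd g x v + fd f x v *\<^sub>R g x = fd (\<lambda>x. f x *\<^sub>R g x) x v" by (simp add: fd_at)
  qed
  then show ?case using Suc.prems by auto
qed

lemma Ck_mult:
  fixes f g :: "'a::real_normed_vector \<Rightarrow> real"
  assumes "open S" "Ck k S f" "Ck k S g"
  shows "Ck k S (\<lambda>x. f x * g x)"
  using Ck_scaleR[OF assms] by simp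

lemma Ck_minus:
  assumes "open S" "Ck k S f"
  shows "Ck k S (\<lambda>x. - f x)"
  using Ck_scaleR[OF assms(1) Ck_const[of k S "-1"] assms(2)] by simp

lemma Ck_diff':
  assumes "open S" "Ck k S f" "Ck k S g"
  shows "Ck k S (\<lambda>x. f x - g x)"
  using Ck_add[OF assms(1,2) Ck_minus[OF assms(1,3)]] by simp

lemma Ck_sum:
  assumes "open S" "finite A" "\<And>i. i \<in> A \<Longrightarrow> Ck k S (f i)"
  shows "Ck k S (\<lambda>x. \<Sum>i\<in>A. f i x)"
  using assms(2,3)
proof (induction A rule: finite_induct)
  case empty
  then show ?case by (simp add: Ck_const)
next
  case (insert a A)
  have "Ck k S (\<lambda>x. f a x + (\<Sum>i\<in>A. f i x))"
    using insert by (intro Ck_add assms(1)) auto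
  then show ?case using insert by simp
qed

lemma Ck_inverse:
  fixes f :: "'a::real_normed_vector \<Rightarrow> real"
  assumes "open S" "Ck k S f" "\<And>x. x \<in> S \<Longrightarrow> f x \<noteq> 0"
  shows "Ck k S (\<lambda>x. inverse (f x))"
  using assms(2)
proof (induction k)
  case 0
  have "(\<lambda>x. inverse (f x)) differentiable at x" if "x \<in> S" for x
    by (rule diff_inverse) (use 0 assms(3) that in auto)
  then show ?case by simp
next
  case (Suc k)
  have IH: "Ck k S (\<lambda>x. inverse (f x))" using Suc Ck_Suc_mono by blast
  have "Ck k S (\<lambda>x. fd (\<lambda>x. inverse (f x)) x v)" for v
  proof (rule Ck_cong[OF assms(1)])
    have d: "Ck k S (\<lambda>x. fd f x v)" using Suc.prems by simp
    show "Ck k S (\<lambda>x. - (inverse (f x) * fd f x v * inverse (f x)))"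
      by (intro Ck_minus Ck_mult assms(1) IH d)
    fix x assume "x \<in> S"
    then have "((\<lambda>x. inverse (f x)) has_derivative (\<lambda>v. - (inverse (f x) * fd f x v * inverse (f x)))) (at x)"
      using Deriv.has_derivative_inverse[of f x "fd f x" UNIV, OF assms(3)[OF \<open>x \<in> S\<close>]]
        Suc.prems \<open>x \<in> S\<close> by (simp add: frechet_derivative_works)
    then show "- (inverse (f x) * fd f x v * inverse (f x)) = fd (\<lambda>x. inverse (f x)) x v" by (simp add: fd_at)
  qed
  moreover have "\<forall>x\<in>S. (\<lambda>x. inverse (f x)) differentiable at x"
    using diff_inverse[of f] Suc.prems assms(3) by simp
  ultimately show ?case by simp
qed

lemma diff_linear_comp:
  assumes "bounded_linear L" "g differentiable at x"
  shows "(\<lambda>x. L (g x)) differentiable at x"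
proof -
  obtain D where "(g has_derivative D) (at x)" using assms(2) by (auto simp: differentiable_def)
  from bounded_linear.has_derivative[OF assms(1) this] show ?thesis by (auto simp: differentiable_def)
qed

lemma Ck_linear_comp:
  assumes "open S" "bounded_linear L" "Ck k S g"
  shows "Ck k S (\<lambda>x. L (g x))"
  using assms(3)
proof (induction k arbitrary: g)
  case 0
  have "(\<lambda>x. L (g x)) differentiable at x" if "x \<in> S" for x
    by (rule diff_linear_comp[OF assms(2)]) (use 0 that in simp)
  then show ?case by simp
next
  case (Suc k)
  have "Ck k S (\<lambda>x. fd (\<lambda>x. L (g x)) x v)" for v
  proof (rule Ck_cong[OF assms(1)])
    show "Ck k S (\<lambda>x. L (fd g x v))" using Suc.IH Suc.prems by simp
    fix x assume "x \<in> S"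
    have "((\<lambda>x. L (g x)) has_derivative (\<lambda>v. L (fd g x v))) (at x)"
      by (rule bounded_linear.has_derivative[OF assms(2)]) (use Suc.prems \<open>x \<in> S\<close> in \<open>simp add: frechet_derivative_works\<close>)
    then show "L (fd g x v) = fd (\<lambda>x. L (g x)) x v" by (simp add: fd_at)
  qed
  moreover have "(\<lambda>x. L (g x)) differentiable at x" if "x \<in> S" for x
    by (rule diff_linear_comp[OF assms(2)]) (use Suc.prems that in simp)
  ultimately show ?case by simp
qed

lemma lin_expand:
  fixes f :: "'a::euclidean_space \<Rightarrow> 'b::real_normed_vector"
  assumes "linear f"
  shows "f a = (\<Sum>i\<in>Basis. (a \<bullet> i) *\<^sub>R f i)"
proof -
  have "f a = f (\<Sum>i\<in>Basis. (a \<bullet> i) *\<^sub>R i)" by (simp add: euclidean_representation)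
  also have "\<dots> = (\<Sum>i\<in>Basis. (a \<bullet> i) *\<^sub>R f i)"
    using assms by (simp add: linear_sum linear_scale)
  finally show ?thesis .
qed

lemma fd_expand:
  fixes f :: "'a::euclidean_space \<Rightarrow> 'b::real_normed_vector"
  assumes "f differentiable at x"
  shows "fd f x a = (\<Sum>i\<in>Basis. (a \<bullet> i) *\<^sub>R fd f x i)"
  using lin_expand linear_frechet_derivative[OF assms] by blast

lemma Ck_comp:
  fixes f :: "'b::euclidean_space \<Rightarrow> 'c::real_normed_vector" and g :: "'a::real_normed_vector \<Rightarrow> 'b"
  assumes "open S" "open V" "Ck k S g" "g ` S \<subseteq> V" "sm V f"
  shows "Ck k S (\<lambda>x. f (g x))"
  using assms(3,5)
proof (induction k arbitrary: f)
  case 0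
  have "(\<lambda>x. f (g x)) differentiable at x" if "x \<in> S" for x
  proof -
    have "g differentiable at x" using 0 that by simp
    moreover have "f differentiable at (g x)" using sm_diff[OF 0(2)] assms(4) that by blast
    ultimately show ?thesis using differentiable_chain_at[of g x f] by (simp add: o_def)
  qed
  then show ?case by simp
next
  case (Suc k)
  have dg: "\<And>x. x \<in> S \<Longrightarrow> g differentiable at x" using Suc.prems by simp
  have df: "\<And>x. x \<in> S \<Longrightarrow> f differentiable at (g x)" using sm_diff[OF Suc.prems(2)] assms(4) by blast
  have gk: "Ck k S g" using Ck_Suc_mono Suc.prems(1) by blast
  have "Ck k S (\<lambda>x. fd (\<lambda>x. f (g x)) x v)" for v
  proof (rule Ck_cong[OF assms(1)])
    show "Ck k S (\<lambda>x. \<Sum>i\<in>Basis. (fd g x v \<bullet> i) *\<^sub>R fd f (g x) i)"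
    proof (rule Ck_sum[OF assms(1)], simp, rule Ck_scaleR[OF assms(1)])
      fix i :: 'b
      have "Ck k S (\<lambda>x. fd g x v)" using Suc.prems by simp
      then show "Ck k S (\<lambda>x. fd g x v \<bullet> i)"
        by (rule Ck_linear_comp[OF assms(1) bounded_linear_inner_left])
      show "Ck k S (\<lambda>x. fd f (g x) i)"
        by (rule Suc.IH[OF gk sm_deriv[OF Suc.prems(2)]])
    qed
    fix x assume "x \<in> S"
    have "fd (\<lambda>x. f (g x)) x = fd f (g x) \<circ> fd g x"
      using frechet_derivative_compose[of g x f] dg df \<open>x \<in> S\<close> by (simp add: o_def)
    then show "(\<Sum>i\<in>Basis. (fd g x v \<bullet> i) *\<^sub>R fd f (g x) i) = fd (\<lambda>x. f (g x)) x v"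
      using fd_expand[OF df[OF \<open>x \<in> S\<close>], of "fd g x v"] by simp
  qed
  moreover have "(\<lambda>x. f (g x)) differentiable at x" if "x \<in> S" for x
    using dg[OF that] df[OF that] differentiable_chain_at[of g x f] by (simp add: o_def)
  ultimately show ?case by simp
qed

lemma sm_comp:
  fixes f :: "'b::euclidean_space \<Rightarrow> 'c::real_normed_vector" and g :: "'a::real_normed_vector \<Rightarrow> 'b"
  assumes "open S" "open V" "sm S g" "g ` S \<subseteq> V" "sm V f"
  shows "sm S (\<lambda>x. f (g x))"
  using assms Ck_comp unfolding sm_def by blast



lemma Ck_subset: "Ck k U f \<Longrightarrow> S \<subseteq> U \<Longrightarrow> Ck k S f"
  by (induction k arbitrary: f) auto

lemma sm_subset: "sm U f \<Longrightarrow> S \<subseteq> U \<Longrightarrow> sm S f"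
  unfolding sm_def using Ck_subset by blast

lemma Ck_cont: "Ck k S f \<Longrightarrow> continuous_on S f"
  by (metis Ck_diff continuous_at_imp_continuous_on differentiable_imp_continuous_within)

lemma Ck_pair:
  assumes "open S" "Ck k S f" "Ck k S g"
  shows "Ck k S (\<lambda>x. (f x, g x))"
  using assms(2,3)
proof (induction k arbitrary: f g)
  case 0
  then show ?case by (simp add: differentiable_Pair)
next
  case (Suc k)
  have "Ck k S (\<lambda>x. fd (\<lambda>x. (f x, g x)) x v)" for v
  proof (rule Ck_cong[OF assms(1)])
    have "Ck k S (\<lambda>x. fd f x v)" "Ck k S (\<lambda>x. fd g x v)" using Suc.prems by simp_all
    then show "Ck k S (\<lambda>x. (fd f x v, fd g x v))" by (rule Suc.IH)
    fix x assume "x \<in> S"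
    have "((\<lambda>x. (f x, g x)) has_derivative (\<lambda>v. (fd f x v, fd g x v))) (at x)"
      by (rule has_derivative_Pair) (use Suc.prems \<open>x \<in> S\<close> in \<open>simp_all add: frechet_derivative_works\<close>)
    then show "(fd f x v, fd g x v) = fd (\<lambda>x. (f x, g x)) x v" by (simp add: fd_at)
  qed
  moreover have "\<forall>x\<in>S. (\<lambda>x. (f x, g x)) differentiable at x"
    using Suc.prems by (simp add: differentiable_Pair)
  ultimately show ?case by simp
qed

lemma sm_add: "open S \<Longrightarrow> sm S f \<Longrightarrow> sm S g \<Longrightarrow> sm S (\<lambda>x. f x + g x)"
  unfolding sm_def using Ck_add by blast
lemma sm_diff': "open S \<Longrightarrow> sm S f \<Longrightarrow> sm S g \<Longrightarrow> sm S (\<lambda>x. f x - g x)"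
  unfolding sm_def using Ck_diff' by blast
lemma sm_scaleR: "open S \<Longrightarrow> sm S f \<Longrightarrow> sm S g \<Longrightarrow> sm S (\<lambda>x. f x *\<^sub>R g x)"
  unfolding sm_def using Ck_scaleR by blast
lemma sm_mult: "open S \<Longrightarrow> sm S (f::_\<Rightarrow>real) \<Longrightarrow> sm S g \<Longrightarrow> sm S (\<lambda>x. f x * g x)"
  unfolding sm_def using Ck_mult by blast
lemma sm_const: "sm S (\<lambda>x. c)"
  unfolding sm_def using Ck_const by blast
lemma sm_linear: "bounded_linear f \<Longrightarrow> sm S f"
  unfolding sm_def using Ck_linear by blast
lemma sm_pair: "open S \<Longrightarrow> sm S f \<Longrightarrow> sm S g \<Longrightarrow> sm S (\<lambda>x. (f x, g x))"
  unfolding sm_def using Ck_pair by blast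

section \<open>Coordinate straightening\<close>

definition Aop :: "'a::euclidean_space \<Rightarrow> ('a \<Rightarrow> real) \<Rightarrow> 'a \<Rightarrow> 'a" where
  "Aop e l v = v - (v \<bullet> e) *\<^sub>R e + l v *\<^sub>R e"

definition Bop :: "'a::euclidean_space \<Rightarrow> ('a \<Rightarrow> real) \<Rightarrow> 'a \<Rightarrow> 'a" where
  "Bop e l w = w + ((w \<bullet> e - l w) / l e) *\<^sub>R e"

lemma AB_inv:
  fixes e :: "'a::euclidean_space"
  assumes "linear l" "l e \<noteq> 0" "e \<in> Basis"
  shows "Bop e l (Aop e l v) = v" "Aop e l (Bop e l w) = w"
proof -
  have ee: "e \<bullet> e = 1" using assms(3) by simp
  have lA: "l (Aop e l v) = l v - (v \<bullet> e) * l e + l v * l e" for v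
    unfolding Aop_def using assms(1) by (simp add: linear_diff linear_add linear_scale)
  have Ae: "Aop e l v \<bullet> e = l v" for v
    unfolding Aop_def by (simp add: inner_simps ee)
  have "(Aop e l v \<bullet> e - l (Aop e l v)) / l e = v \<bullet> e - l v"
    unfolding Ae lA using assms(2) by (simp add: field_simps)
  then have "Bop e l (Aop e l v) = Aop e l v + (v \<bullet> e - l v) *\<^sub>R e"
    unfolding Bop_def by simp
  then show "Bop e l (Aop e l v) = v"
    by (simp add: Aop_def algebra_simps scaleR_diff_left)
  define c where "c = (w \<bullet> e - l w) / l e"
  have Be: "Bop e l w \<bullet> e = w \<bullet> e + c" unfolding Bop_def c_def by (simp add: inner_simps ee)
  have lB: "l (Bop e l w) = w \<bullet> e"
    unfolding Bop_def using assms(1,2) by (simp add: linear_add linear_scale field_simps)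
  show "Aop e l (Bop e l w) = w"
    unfolding Aop_def Be lB by (simp add: Bop_def c_def[symmetric] algebra_simps)
qed

lemma linear_Aop: "linear l \<Longrightarrow> linear (Aop e l)"
  unfolding Aop_def linear_iff by (simp add: linear_add linear_scale inner_simps algebra_simps)

lemma linear_Bop: "linear l \<Longrightarrow> linear (Bop e l)"
  unfolding Bop_def linear_iff
  by (simp add: linear_add linear_scale linear_diff inner_simps algebra_simps diff_divide_distrib add_divide_distrib)



definition straight :: "'a::euclidean_space \<Rightarrow> ('a \<Rightarrow> real) \<Rightarrow> 'a \<Rightarrow> 'a" where
  "straight e H x = x - (x \<bullet> e) *\<^sub>R e + H x *\<^sub>R e"

lemma straight_e: "e \<in> Basis \<Longrightarrow> straight e H x \<bullet> e = H x"
  unfolding straight_def by (simp add: inner_simps)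

lemma straight_j: "e \<in> Basis \<Longrightarrow> j \<in> Basis \<Longrightarrow> j \<noteq> e \<Longrightarrow> straight e H x \<bullet> j = x \<bullet> j"
  unfolding straight_def by (simp add: inner_simps inner_not_same_Basis)

lemma bl_proj: "bounded_linear (\<lambda>x::'a::euclidean_space. x - (x \<bullet> e) *\<^sub>R e)"
  by (intro bounded_linear_sub bounded_linear_ident
      bounded_linear_compose[OF bounded_linear_scaleR_left bounded_linear_inner_left])

lemma straight_has_derivative:
  assumes "(H has_derivative H') (at x)"
  shows "(straight e H has_derivative Aop e H') (at x)"
proof -
  have "((\<lambda>x. (x - (x \<bullet> e) *\<^sub>R e) + H x *\<^sub>R e) has_derivative (\<lambda>v. (v - (v \<bullet> e) *\<^sub>R e) + H' v *\<^sub>R e)) (at x)"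
    by (intro has_derivative_add bounded_linear_imp_has_derivative bl_proj has_derivative_scaleR_left assms)
  then show ?thesis unfolding straight_def Aop_def by simp
qed

lemma sm_straight:
  assumes "open U" "sm U H"
  shows "sm U (straight e H)"
proof -
  have "sm U (\<lambda>x. (x - (x \<bullet> e) *\<^sub>R e) + H x *\<^sub>R e)"
    by (intro sm_add sm_scaleR sm_linear bl_proj assms sm_const)
  then show ?thesis unfolding straight_def by simp
qed

lemma straighten:
  fixes H :: "'a::euclidean_space \<Rightarrow> real"
  assumes U: "open U" and smH: "sm U H" and pU: "p \<in> U" and e: "e \<in> Basis" and He: "fd H p e \<noteq> 0"
  obtains W where "open W" "p \<in> W" "W \<subseteq> U" "inj_on (straight e H) W"
    "open (straight e H ` W)" "sm W (straight e H)" "sm (straight e H ` W) (inv_into W (straight e H))"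
proof -
  define \<Psi> where "\<Psi> = straight e H"
  have dH: "\<And>x. x \<in> U \<Longrightarrow> (H has_derivative fd H x) (at x)"
    using sm_diff[OF smH] frechet_derivative_works by blast
  have linH: "\<And>x. x \<in> U \<Longrightarrow> linear (fd H x)"
    using sm_diff[OF smH] linear_frechet_derivative by blast
  have dPsi: "\<And>x. x \<in> U \<Longrightarrow> (\<Psi> has_derivative Aop e (fd H x)) (at x)"
    unfolding \<Psi>_def by (rule straight_has_derivative[OF dH])
  define U0 where "U0 = U \<inter> (\<lambda>x. fd H x e) -` (-{0})"
  have "continuous_on U (\<lambda>x. fd H x e)"
    using Ck_cont sm_Ck sm_deriv[OF smH] by blast
  then have oU0: "open U0" unfolding U0_def
    using continuous_open_preimage[OF _ U, of _ "-{0}"] by auto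
  have pU0: "p \<in> U0" using pU He by (simp add: U0_def)
  have U0U: "U0 \<subseteq> U" by (auto simp: U0_def)
  define f' where "f' x = Blinfun (Aop e (fd H x))" for x
  have bl: "\<And>x. x \<in> U \<Longrightarrow> bounded_linear (Aop e (fd H x))"
    using linH linear_Aop linear_conv_bounded_linear by blast
  have fapp: "\<And>x. x \<in> U \<Longrightarrow> blinfun_apply (f' x) = Aop e (fd H x)"
    unfolding f'_def using bl bounded_linear_Blinfun_apply by blast
  have derf: "\<And>x. x \<in> U0 \<Longrightarrow> (\<Psi> has_derivative blinfun_apply (f' x)) (at x)"
    using dPsi fapp U0U by auto
  have contf: "continuous_on U0 f'"
  proof (rule continuous_on_blinfun_componentwise)
    fix i :: 'a assume "i \<in> Basis"
    have "continuous_on U0 (\<lambda>x. fd H x i)"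
      using Ck_cont sm_Ck sm_deriv[OF smH] U0U continuous_on_subset by blast
    then have "continuous_on U0 (\<lambda>x. i - (i \<bullet> e) *\<^sub>R e + fd H x i *\<^sub>R e)"
      by (intro continuous_intros)
    moreover have "\<And>x. x \<in> U0 \<Longrightarrow> i - (i \<bullet> e) *\<^sub>R e + fd H x i *\<^sub>R e = blinfun_apply (f' x) i"
      using fapp U0U by (auto simp: Aop_def)
    ultimately show "continuous_on U0 (\<lambda>x. blinfun_apply (f' x) i)"
      by (rule continuous_on_eq)
  qed
  have blB: "bounded_linear (Bop e (fd H p))"
    using linH[OF pU] linear_Bop linear_conv_bounded_linear by blast
  have invf: "Blinfun (Bop e (fd H p)) o\<^sub>L f' p = id_blinfun"
    by (rule blinfun_eqI) (simp add: bounded_linear_Blinfun_apply[OF blB] fapp[OF pU] AB_inv(1)[OF linH[OF pU] He e])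
  have "\<exists>U' V g g'. open U' \<and> U' \<subseteq> U0 \<and> p \<in> U' \<and> open V \<and> homeomorphism U' V \<Psi> g \<and>
      (\<forall>y\<in>V. (g has_derivative (g' y)) (at y)) \<and> (\<forall>y\<in>V. g' y = inv (blinfun_apply (f'(g y))))"
    apply (rule inverse_function_theorem[OF oU0 derf contf pU0 invf])
     apply simp
    subgoal for U' V g g'
      by (intro exI[of _ U'] exI[of _ V] exI[of _ g] exI[of _ g'] conjI ballI) auto
    done
  then obtain U' V g g' where "open U'" "U' \<subseteq> U0" "p \<in> U'" "open V"
    and hom: "homeomorphism U' V \<Psi> g"
    and dg: "\<And>y. y \<in> V \<Longrightarrow> (g has_derivative (g' y)) (at y)"
    and g': "\<And>y. y \<in> V \<Longrightarrow> g' y = inv (blinfun_apply (f'(g y)))"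
    by blast
  have gPsi: "\<And>x. x \<in> U' \<Longrightarrow> g (\<Psi> x) = x" and imU': "\<Psi> ` U' = V"
    and Psig: "\<And>y. y \<in> V \<Longrightarrow> \<Psi> (g y) = y" and imV: "g ` V = U'"
    using hom by (auto simp: homeomorphism_def)
  have inj: "inj_on \<Psi> U'" by (rule inj_on_inverseI[of _ g]) (rule gPsi)
  have gV: "\<And>y. y \<in> V \<Longrightarrow> g y \<in> U0" using imV \<open>U' \<subseteq> U0\<close> by auto
  have invg: "\<And>y. y \<in> V \<Longrightarrow> inv_into U' \<Psi> y = g y"
  proof -
    fix y assume "y \<in> V"
    then have "g y \<in> U'" using imV by auto
    then have "inv_into U' \<Psi> (\<Psi> (g y)) = g y" using inv_into_f_f[OF inj] by blast
    then show "inv_into U' \<Psi> y = g y" using Psig[OF \<open>y \<in> V\<close>] by simp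
  qed
  have fdg: "fd g y w = w + ((w \<bullet> e - fd H (g y) w) * inverse (fd H (g y) e)) *\<^sub>R e" if "y \<in> V" for y w
  proof -
    have gy: "g y \<in> U" "fd H (g y) e \<noteq> 0" using gV[OF that] U0U by (auto simp: U0_def)
    have "inv (Aop e (fd H (g y))) = Bop e (fd H (g y))"
      by (rule inv_unique_comp) (auto simp: fun_eq_iff AB_inv[OF linH[OF gy(1)] gy(2) e])
    then have "fd g y = Bop e (fd H (g y))"
      using fd_at[OF dg[OF that]] g'[OF that] fapp[OF gy(1)] by simp
    then show ?thesis by (simp add: Bop_def divide_inverse)
  qed
  have Ckg: "Ck k V g" for k
  proof (induction k)
    case 0
    then show ?case using dg by (auto simp: differentiable_def)
  next
    case (Suc k)
    have "Ck k V (\<lambda>y. fd g y w)" for w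
    proof (rule Ck_cong[OF \<open>open V\<close>])
      show "y \<in> V \<Longrightarrow> w + ((w \<bullet> e - fd H (g y) w) * inverse (fd H (g y) e)) *\<^sub>R e = fd g y w" for y
        using fdg by simp
      have gVU: "g ` V \<subseteq> U" using gV U0U by auto
      have c1: "Ck k V (\<lambda>y. fd H (g y) w)"
        by (rule Ck_comp[OF \<open>open V\<close> U Suc gVU sm_deriv[OF smH]])
      have c2: "Ck k V (\<lambda>y. fd H (g y) e)"
        by (rule Ck_comp[OF \<open>open V\<close> U Suc gVU sm_deriv[OF smH]])
      have c3: "Ck k V (\<lambda>y. inverse (fd H (g y) e))"
        by (rule Ck_inverse[OF \<open>open V\<close> c2]) (use gV in \<open>auto simp: U0_def\<close>)
      show "Ck k V (\<lambda>y. w + ((w \<bullet> e - fd H (g y) w) * inverse (fd H (g y) e)) *\<^sub>R e)"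
        by (intro Ck_add Ck_scaleR Ck_mult Ck_diff' Ck_const c1 c3 \<open>open V\<close>)
    qed
    moreover have "\<forall>y\<in>V. g differentiable at y" using dg by (auto simp: differentiable_def)
    ultimately show ?case by simp
  qed
  have smg: "sm (\<Psi> ` U') (inv_into U' \<Psi>)"
    unfolding imU' by (rule sm_cong[OF \<open>open V\<close> invg[symmetric]]) (auto simp: sm_def Ckg)
  show ?thesis
  proof (rule that[of U'])
    show "sm U' (straight e H)" using sm_straight[OF U smH] \<open>U' \<subseteq> U0\<close> U0U sm_subset by blast
    show "open U'" by fact
    show "p \<in> U'" by fact
    show "U' \<subseteq> U" using \<open>U' \<subseteq> U0\<close> U0U by blast
    show "inj_on (straight e H) U'" using inj unfolding \<Psi>_def .
    show "open (straight e H ` U')" using \<open>open V\<close> imU' unfolding \<Psi>_def by simp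
    show "sm (straight e H ` U') (inv_into U' (straight e H))" using smg unfolding \<Psi>_def .
  qed
qed



lemma fdw: "f differentiable at x \<Longrightarrow> (f has_derivative fd f x) (at x)"
  using frechet_derivative_works by blast

lemma zero_deriv_subspace:
  fixes g :: "'a::euclidean_space \<Rightarrow> 'b::real_normed_vector"
  assumes L: "subspace L" and B: "open B" and q: "q \<in> L" "q \<in> B"
    and dg: "g differentiable at q" and z: "\<And>y. y \<in> L \<Longrightarrow> y \<in> B \<Longrightarrow> g y = 0" and u: "u \<in> L"
  shows "fd g q u = 0"
proof -
  define \<gamma> where "\<gamma> = (\<lambda>s::real. q + s *\<^sub>R u)"
  have dgam: "(\<gamma> has_derivative (\<lambda>s. s *\<^sub>R u)) (at 0)"
    unfolding \<gamma>_def by (auto intro!: derivative_eq_intros)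
  have g0: "(g has_derivative fd g q) (at (\<gamma> 0))"
    using fdw[OF dg] \<gamma>_def by simp
  have d1: "((\<lambda>s. g (\<gamma> s)) has_derivative (\<lambda>s. fd g q (s *\<^sub>R u))) (at 0)"
    using diff_chain_at[OF dgam g0] by (simp add: o_def)
  define T where "T = \<gamma> -` B"
  have "open T" unfolding T_def \<gamma>_def
    by (rule continuous_open_vimage[OF B]) (auto intro!: continuous_intros)
  moreover have "0 \<in> T" using q by (simp add: T_def \<gamma>_def)
  moreover have "\<And>s. s \<in> T \<Longrightarrow> g (\<gamma> s) = 0"
    using z L q u by (auto simp: T_def \<gamma>_def subspace_add subspace_scale)
  ultimately have d2: "((\<lambda>s. g (\<gamma> s)) has_derivative (\<lambda>s. 0)) (at 0)"
    using has_derivative_transform_within_open[OF has_derivative_const[of 0] \<open>open T\<close> \<open>0 \<in> T\<close>, of "\<lambda>s. g (\<gamma> s)"]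
    by simp
  have "(\<lambda>s. fd g q (s *\<^sub>R u)) = (\<lambda>s. 0)" using has_derivative_unique[OF d1 d2] .
  then show ?thesis by (metis scaleR_one)
qed

lemma chart_facts:
  assumes "submanifold_chart S p W \<Psi> L"
  shows "open W" "p \<in> W" "inj_on \<Psi> W" "open (\<Psi> ` W)" "sm W \<Psi>" "sm (\<Psi> ` W) (inv_into W \<Psi>)"
    "subspace L" "\<Psi> ` (S \<inter> W) = L \<inter> \<Psi> ` W"
  using assms unfolding submanifold_chart_def smooth_on_sm by auto

lemma chart_inv_deriv:
  assumes c: "submanifold_chart S p W \<Psi> L"
  shows "fd (inv_into W \<Psi>) (\<Psi> p) (fd \<Psi> p v) = v"
proof -
  note cf = chart_facts[OF c]
  have d\<Psi>: "\<Psi> differentiable at p" using sm_diff[OF cf(5) cf(2)] .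
  have d\<phi>: "inv_into W \<Psi> differentiable at (\<Psi> p)" using sm_diff[OF cf(6)] cf(2) by blast
  have "((\<lambda>x. inv_into W \<Psi> (\<Psi> x)) has_derivative (fd (inv_into W \<Psi>) (\<Psi> p) \<circ> fd \<Psi> p)) (at p)"
    using diff_chain_at[of \<Psi> "fd \<Psi> p" p "inv_into W \<Psi>" "fd (inv_into W \<Psi>) (\<Psi> p)"]
      fdw[OF d\<Psi>] fdw[OF d\<phi>] by (simp add: o_def)
  moreover have "((\<lambda>x. inv_into W \<Psi> (\<Psi> x)) has_derivative (\<lambda>x. x)) (at p)"
    by (rule has_derivative_transform_within_open[OF has_derivative_ident cf(1) cf(2)])
      (simp add: inv_into_f_f[OF cf(3)])
  ultimately have "fd (inv_into W \<Psi>) (\<Psi> p) \<circ> fd \<Psi> p = (\<lambda>x. x)"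
    using has_derivative_unique by blast
  then show ?thesis by (metis comp_apply)
qed

lemma chart_inv_in:
  assumes c: "submanifold_chart S p W \<Psi> L" and y: "y \<in> L" "y \<in> \<Psi> ` W"
  shows "inv_into W \<Psi> y \<in> S \<inter> W"
proof -
  note cf = chart_facts[OF c]
  have "y \<in> \<Psi> ` (S \<inter> W)" using cf(8) y by auto
  then obtain x where x: "x \<in> S \<inter> W" "y = \<Psi> x" by auto
  then show ?thesis using inv_into_f_f[OF cf(3)] by auto
qed

lemma chart_p_in_L:
  assumes c: "submanifold_chart S p W \<Psi> L" and "p \<in> S"
  shows "\<Psi> p \<in> L"
  using chart_facts(8)[OF c] chart_facts(2)[OF c] assms(2) by blast

lemma tangent_zero:
  assumes pS: "p \<in> S" and U: "open U" "p \<in> U" and dG: "G differentiable at p"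
    and z: "\<And>x. x \<in> S \<Longrightarrow> x \<in> U \<Longrightarrow> G x = 0" and v: "v \<in> tangent_space S p"
  shows "fd G p v = 0"
proof -
  obtain W \<Psi> L where c: "submanifold_chart S p W \<Psi> L" and u: "fd \<Psi> p v \<in> L"
    using v unfolding tangent_space_def by blast
  note cf = chart_facts[OF c]
  define \<phi> where "\<phi> = inv_into W \<Psi>"
  have \<phi>p: "\<phi> (\<Psi> p) = p" unfolding \<phi>_def using inv_into_f_f[OF cf(3) cf(2)] .
  have d\<phi>: "\<And>y. y \<in> \<Psi> ` W \<Longrightarrow> \<phi> differentiable at y" using sm_diff[OF cf(6)] \<phi>_def by blast
  have "continuous_on (\<Psi> ` W) \<phi>"
    using Ck_cont sm_Ck cf(6) \<phi>_def by blast
  then have oB: "open (\<Psi> ` W \<inter> \<phi> -` U)"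
    using continuous_open_preimage[OF _ cf(4) U(1)] by blast
  have dGphi: "(\<lambda>x. G (\<phi> x)) differentiable at (\<Psi> p)"
    using differentiable_chain_at[of \<phi> "\<Psi> p" G] d\<phi> cf(2) dG \<phi>p by (simp add: o_def)
  have "fd (\<lambda>x. G (\<phi> x)) (\<Psi> p) (fd \<Psi> p v) = 0"
  proof (rule zero_deriv_subspace[OF cf(7) oB _ _ dGphi _ u])
    show "\<Psi> p \<in> L" using chart_p_in_L[OF c pS] .
    show "\<Psi> p \<in> \<Psi> ` W \<inter> \<phi> -` U" using cf(2) \<phi>p U(2) by auto
    fix y assume "y \<in> L" "y \<in> \<Psi> ` W \<inter> \<phi> -` U"
    then show "G (\<phi> y) = 0" using chart_inv_in[OF c, of y] z \<phi>_def by auto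
  qed
  moreover have "fd (\<lambda>x. G (\<phi> x)) (\<Psi> p) = fd G p \<circ> fd \<phi> (\<Psi> p)"
    using frechet_derivative_compose[of \<phi> "\<Psi> p" G] d\<phi> cf(2) dG \<phi>p by (simp add: o_def)
  ultimately show ?thesis using chart_inv_deriv[OF c, of v] \<phi>_def by simp
qed

lemma tangent_by_chart:
  "submanifold_chart S p W \<Psi> L \<Longrightarrow> fd \<Psi> p v \<in> L \<Longrightarrow> v \<in> tangent_space S p"
  unfolding tangent_space_def by blast

lemma dirderiv2_expand:
  fixes F :: "'a::euclidean_space \<Rightarrow> real"
  assumes V: "open V" "x \<in> V" and dF: "\<And>z. z \<in> V \<Longrightarrow> F differentiable at z"
    and d2F: "\<And>i. (\<lambda>z. fd F z i) differentiable at x"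
  shows "dirderiv2 F a b x = (\<Sum>i\<in>Basis. (a \<bullet> i) * fd (\<lambda>z. fd F z i) x b)"
proof -
  have "((\<lambda>z. \<Sum>i\<in>Basis. (a \<bullet> i) * fd F z i) has_derivative (\<lambda>b. \<Sum>i\<in>Basis. (a \<bullet> i) * fd (\<lambda>z. fd F z i) x b)) (at x)"
    by (intro has_derivative_sum has_derivative_mult_right fdw d2F)
  then have "((\<lambda>z. fd F z a) has_derivative (\<lambda>b. \<Sum>i\<in>Basis. (a \<bullet> i) * fd (\<lambda>z. fd F z i) x b)) (at x)"
  proof (rule has_derivative_transform_within_open[OF _ V])
    fix z assume "z \<in> V"
    show "(\<Sum>i\<in>Basis. (a \<bullet> i) * fd F z i) = fd F z a" using fd_expand[OF dF[OF \<open>z \<in> V\<close>], of a] by simp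
  qed
  then show ?thesis unfolding dirderiv2_def by (simp add: fd_at)
qed

lemma hess_chain:
  fixes F :: "'a::euclidean_space \<Rightarrow> real" and \<phi> :: "'b::euclidean_space \<Rightarrow> 'a"
  assumes V: "open V" "\<phi> q \<in> V" and dF: "\<And>x. x \<in> V \<Longrightarrow> F differentiable at x"
    and d2F: "\<And>a. (\<lambda>x. fd F x a) differentiable at (\<phi> q)"
    and Q: "open Q" "q \<in> Q" and d\<phi>: "\<And>y. y \<in> Q \<Longrightarrow> \<phi> differentiable at y"
    and d2\<phi>: "(\<lambda>y. fd \<phi> y u) differentiable at q"
  shows "((\<lambda>y. fd (\<lambda>x. F (\<phi> x)) y u) has_derivative
           (\<lambda>u'. dirderiv2 F (fd \<phi> q u) (fd \<phi> q u') (\<phi> q) + fd F (\<phi> q) (dirderiv2 \<phi> u u' q))) (at q)"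
proof -
  have "continuous_on Q \<phi>"
    using d\<phi> by (meson continuous_at_imp_continuous_on differentiable_imp_continuous_within)
  then have oQ': "open (Q \<inter> \<phi> -` V)" using continuous_open_preimage[OF _ Q(1) V(1)] by blast
  have qQ': "q \<in> Q \<inter> \<phi> -` V" using Q V by auto
  define c where "c = (\<lambda>y. fd \<phi> y u)"
  have eq: "(\<Sum>i\<in>Basis. (c y \<bullet> i) * fd F (\<phi> y) i) = fd (\<lambda>x. F (\<phi> x)) y u" if "y \<in> Q \<inter> \<phi> -` V" for y
  proof -
    have "fd (\<lambda>x. F (\<phi> x)) y = fd F (\<phi> y) \<circ> fd \<phi> y"
      using frechet_derivative_compose[of \<phi> y F] d\<phi> dF that by (simp add: o_def)
    then show ?thesis using fd_expand[OF dF, of "\<phi> y" "c y"] that by (simp add: c_def)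
  qed
  have dc: "(c has_derivative fd c q) (at q)" unfolding c_def by (rule fdw[OF d2\<phi>])
  have di: "((\<lambda>y. fd F (\<phi> y) i) has_derivative (\<lambda>h. fd (\<lambda>x. fd F x i) (\<phi> q) (fd \<phi> q h))) (at q)" for i
    using diff_chain_at[OF fdw[OF d\<phi>[OF Q(2)]] fdw[OF d2F[of i]]] by (simp add: o_def)
  have dci: "((\<lambda>y. c y \<bullet> i) has_derivative (\<lambda>h. fd c q h \<bullet> i)) (at q)" for i
    by (rule bounded_linear.has_derivative[OF bounded_linear_inner_left dc])
  have D: "((\<lambda>y. \<Sum>i\<in>Basis. (c y \<bullet> i) * fd F (\<phi> y) i) has_derivative
     (\<lambda>h. \<Sum>i\<in>Basis. (c q \<bullet> i) * fd (\<lambda>x. fd F x i) (\<phi> q) (fd \<phi> q h) + (fd c q h \<bullet> i) * fd F (\<phi> q) i)) (at q)"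
  proof (rule has_derivative_sum)
    fix i :: 'a
    show "((\<lambda>y. (c y \<bullet> i) * fd F (\<phi> y) i) has_derivative
      (\<lambda>h. (c q \<bullet> i) * fd (\<lambda>x. fd F x i) (\<phi> q) (fd \<phi> q h) + (fd c q h \<bullet> i) * fd F (\<phi> q) i)) (at q)"
      using has_derivative_mult[OF dci[of i] di[of i]] .
  qed
  have val: "(\<Sum>i\<in>Basis. (c q \<bullet> i) * fd (\<lambda>x. fd F x i) (\<phi> q) (fd \<phi> q h) + (fd c q h \<bullet> i) * fd F (\<phi> q) i)
      = dirderiv2 F (fd \<phi> q u) (fd \<phi> q h) (\<phi> q) + fd F (\<phi> q) (dirderiv2 \<phi> u h q)" for h
  proof -
    have "dirderiv2 F (c q) (fd \<phi> q h) (\<phi> q) = (\<Sum>i\<in>Basis. (c q \<bullet> i) * fd (\<lambda>x. fd F x i) (\<phi> q) (fd \<phi> q h))"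
      by (rule dirderiv2_expand[OF V dF d2F])
    moreover have "fd F (\<phi> q) (fd c q h) = (\<Sum>i\<in>Basis. (fd c q h \<bullet> i) * fd F (\<phi> q) i)"
      using fd_expand[OF dF[OF V(2)], of "fd c q h"] by simp
    moreover have "dirderiv2 \<phi> u h q = fd c q h" unfolding dirderiv2_def c_def by simp
    ultimately show ?thesis by (simp add: sum.distrib c_def)
  qed
  show ?thesis
    using has_derivative_transform_within_open[OF D oQ' qQ' eq] val by simp
qed

lemma chart_hessian:
  fixes H F :: "'a::euclidean_space \<Rightarrow> real"
  assumes c: "submanifold_chart M p W \<Psi> L" and pM: "p \<in> M"
    and U: "open U" "p \<in> U" and smH: "sm U H" and zH: "\<And>x. x \<in> M \<Longrightarrow> x \<in> U \<Longrightarrow> H x = 0"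
    and smF: "sm UNIV F" and lam: "\<And>a. fd F p a = l * fd H p a"
    and v: "fd \<Psi> p v \<in> L" and w: "fd \<Psi> p w \<in> L"
  shows "dirderiv2 (F \<circ> inv_into W \<Psi>) (fd \<Psi> p v) (fd \<Psi> p w) (\<Psi> p) = dirderiv2 F v w p - l * dirderiv2 H v w p"
proof -
  note cf = chart_facts[OF c]
  define \<phi> where "\<phi> = inv_into W \<Psi>"
  define q where "q = \<Psi> p"
  define u where "u = fd \<Psi> p v"
  define u' where "u' = fd \<Psi> p w"
  have \<phi>q: "\<phi> q = p" unfolding \<phi>_def q_def using inv_into_f_f[OF cf(3) cf(2)] .
  have \<phi>u: "fd \<phi> q u = v" "fd \<phi> q u' = w" unfolding \<phi>_def q_def u_def u'_def using chart_inv_deriv[OF c] by auto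
  have Q: "open (\<Psi> ` W)" "q \<in> \<Psi> ` W" using cf(4) cf(2) q_def by auto
  have d\<phi>: "\<And>y. y \<in> \<Psi> ` W \<Longrightarrow> \<phi> differentiable at y" using sm_diff[OF cf(6)] \<phi>_def by blast
  have d2\<phi>: "\<And>y a. y \<in> \<Psi> ` W \<Longrightarrow> (\<lambda>y. fd \<phi> y a) differentiable at y"
    using sm_diff[OF sm_deriv[OF cf(6)]] \<phi>_def by blast
  have hF: "((\<lambda>y. fd (\<lambda>x. F (\<phi> x)) y u) has_derivative
           (\<lambda>u'. dirderiv2 F (fd \<phi> q u) (fd \<phi> q u') (\<phi> q) + fd F (\<phi> q) (dirderiv2 \<phi> u u' q))) (at q)"
    by (rule hess_chain[OF open_UNIV _ _ _ Q d\<phi> d2\<phi>[OF Q(2)]])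
      (use sm_diff[OF smF] sm_diff[OF sm_deriv[OF smF]] in auto)
  have hH: "((\<lambda>y. fd (\<lambda>x. H (\<phi> x)) y u) has_derivative
           (\<lambda>u'. dirderiv2 H (fd \<phi> q u) (fd \<phi> q u') (\<phi> q) + fd H (\<phi> q) (dirderiv2 \<phi> u u' q))) (at q)"
    by (rule hess_chain[OF U(1) _ _ _ Q d\<phi> d2\<phi>[OF Q(2)]])
      (use sm_diff[OF smH] sm_diff[OF sm_deriv[OF smH]] \<phi>q U(2) in auto)
  have "continuous_on (\<Psi> ` W) \<phi>" using Ck_cont sm_Ck cf(6) \<phi>_def by blast
  then have oB: "open (\<Psi> ` W \<inter> \<phi> -` U)"
    using continuous_open_preimage[OF _ cf(4) U(1)] by blast
  have qL: "q \<in> L" using chart_p_in_L[OF c pM] q_def by simp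
  have qB: "q \<in> \<Psi> ` W \<inter> \<phi> -` U" using Q(2) \<phi>q U(2) by auto
  have uL: "u \<in> L" "u' \<in> L" using v w u_def u'_def by auto
  have z0: "H (\<phi> y) = 0" if "y \<in> L" "y \<in> \<Psi> ` W \<inter> \<phi> -` U" for y
    using chart_inv_in[OF c, of y] that zH \<phi>_def by auto
  have z1: "fd (\<lambda>x. H (\<phi> x)) y u = 0" if "y \<in> L" "y \<in> \<Psi> ` W \<inter> \<phi> -` U" for y
  proof (rule zero_deriv_subspace[OF cf(7) oB that _ _ uL(1)])
    show "(\<lambda>x. H (\<phi> x)) differentiable at y"
      using differentiable_chain_at[of \<phi> y H] d\<phi> that sm_diff[OF smH] by (simp add: o_def)
    show "\<And>y. y \<in> L \<Longrightarrow> y \<in> \<Psi> ` W \<inter> \<phi> -` U \<Longrightarrow> H (\<phi> y) = 0" by (rule z0)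
  qed
  have "fd (\<lambda>y. fd (\<lambda>x. H (\<phi> x)) y u) q u' = 0"
  proof (rule zero_deriv_subspace[OF cf(7) oB qL qB _ _ uL(2)])
    show "(\<lambda>y. fd (\<lambda>x. H (\<phi> x)) y u) differentiable at q" using hH by (auto simp: differentiable_def)
  qed (rule z1)
  then have H0: "dirderiv2 H v w p + fd H p (dirderiv2 \<phi> u u' q) = 0"
    using fd_at[OF hH] \<phi>u \<phi>q by simp
  have "dirderiv2 (F \<circ> \<phi>) u u' q = dirderiv2 F v w p + fd F p (dirderiv2 \<phi> u u' q)"
    unfolding dirderiv2_def[of "F \<circ> \<phi>"] using fd_at[OF hF] \<phi>u \<phi>q by (simp add: o_def dirderiv2_def)
  also have "\<dots> = dirderiv2 F v w p - l * dirderiv2 H v w p"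
  proof -
    have "l * (dirderiv2 H v w p + fd H p (dirderiv2 \<phi> u u' q)) = 0" using H0 by simp
    then show ?thesis using lam by (simp add: algebra_simps)
  qed
  finally show ?thesis unfolding \<phi>_def q_def u_def u'_def .
qed

lemma chart_tangent_in_L:
  assumes c: "submanifold_chart S p W \<Psi> L" and c0: "submanifold_chart S p W0 \<Psi>0 L0"
    and pS: "p \<in> S" and v: "fd \<Psi>0 p v \<in> L0"
  shows "fd \<Psi> p v \<in> L"
proof -
  note cf = chart_facts[OF c] and cf0 = chart_facts[OF c0]
  define \<phi>0 where "\<phi>0 = inv_into W0 \<Psi>0"
  define q0 where "q0 = \<Psi>0 p"
  have \<phi>q: "\<phi>0 q0 = p" unfolding \<phi>0_def q0_def using inv_into_f_f[OF cf0(3) cf0(2)] .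
  have d\<phi>: "\<And>y. y \<in> \<Psi>0 ` W0 \<Longrightarrow> \<phi>0 differentiable at y" using sm_diff[OF cf0(6)] \<phi>0_def by blast
  have q0W: "q0 \<in> \<Psi>0 ` W0" using cf0(2) q0_def by auto
  have d\<Psi>: "\<Psi> differentiable at p" using sm_diff[OF cf(5) cf(2)] .
  have "continuous_on (\<Psi>0 ` W0) \<phi>0" using Ck_cont sm_Ck cf0(6) \<phi>0_def by blast
  then have oB: "open (\<Psi>0 ` W0 \<inter> \<phi>0 -` W)"
    using continuous_open_preimage[OF _ cf0(4) cf(1)] by blast
  have qB: "q0 \<in> \<Psi>0 ` W0 \<inter> \<phi>0 -` W" using q0W \<phi>q cf(2) by auto
  have qL: "q0 \<in> L0" using chart_p_in_L[OF c0 pS] q0_def by simp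
  have "z \<bullet> fd \<Psi> p v = 0" if z: "z \<in> orthogonal_comp L" for z
  proof -
    have dg: "(\<lambda>y. z \<bullet> \<Psi> (\<phi>0 y)) differentiable at q0"
    proof -
      have "(\<lambda>y. \<Psi> (\<phi>0 y)) differentiable at q0"
        using differentiable_chain_at[of \<phi>0 q0 \<Psi>] d\<phi>[OF q0W] d\<Psi> \<phi>q by (simp add: o_def)
      then show ?thesis using diff_linear_comp[OF bounded_linear_inner_right] by blast
    qed
    have "fd (\<lambda>y. z \<bullet> \<Psi> (\<phi>0 y)) q0 (fd \<Psi>0 p v) = 0"
    proof (rule zero_deriv_subspace[OF cf0(7) oB qL qB dg _ v])
      fix y assume "y \<in> L0" "y \<in> \<Psi>0 ` W0 \<inter> \<phi>0 -` W"
      then have "\<phi>0 y \<in> S \<inter> W" using chart_inv_in[OF c0, of y] \<phi>0_def by auto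
      then have "\<Psi> (\<phi>0 y) \<in> L" using cf(8) by blast
      then have "\<Psi> (\<phi>0 y) \<bullet> z = 0" using z by (simp add: orthogonal_comp_def orthogonal_def)
      then show "z \<bullet> \<Psi> (\<phi>0 y) = 0" by (simp add: inner_commute)
    qed
    moreover have "((\<lambda>y. z \<bullet> \<Psi> (\<phi>0 y)) has_derivative (\<lambda>h. z \<bullet> fd \<Psi> p (fd \<phi>0 q0 h))) (at q0)"
    proof -
      have "((\<lambda>y. \<Psi> (\<phi>0 y)) has_derivative (\<lambda>h. fd \<Psi> p (fd \<phi>0 q0 h))) (at q0)"
        using diff_chain_at[OF fdw[OF d\<phi>[OF q0W]], of \<Psi> "fd \<Psi> p"] fdw[OF d\<Psi>] \<phi>q by (simp add: o_def)
      then show ?thesis by (rule bounded_linear.has_derivative[OF bounded_linear_inner_right])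
    qed
    ultimately show ?thesis using fd_at chart_inv_deriv[OF c0, of v] \<phi>0_def q0_def by metis
  qed
  then have "fd \<Psi> p v \<in> orthogonal_comp (orthogonal_comp L)"
    by (auto simp: orthogonal_comp_def orthogonal_def inner_commute)
  then show ?thesis using orthogonal_comp_self[OF cf(7)] by simp
qed

lemma tangent_in_L:
  assumes c: "submanifold_chart S p W \<Psi> L" and pS: "p \<in> S" and v: "v \<in> tangent_space S p"
  shows "fd \<Psi> p v \<in> L"
  using v chart_tangent_in_L[OF c _ pS] unfolding tangent_space_def by blast

lemma dirderiv2_scale:
  fixes F :: "'a::real_normed_vector \<Rightarrow> real"
  assumes V: "open V" "x \<in> V" and dF: "\<And>z. z \<in> V \<Longrightarrow> F differentiable at z"
    and d2F: "(\<lambda>z. fd F z e) differentiable at x"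
  shows "dirderiv2 F (a *\<^sub>R e) (b *\<^sub>R e') x = a * b * dirderiv2 F e e' x"
proof -
  have "((\<lambda>z. a * fd F z e) has_derivative (\<lambda>h. a * fd (\<lambda>z. fd F z e) x h)) (at x)"
    by (intro has_derivative_mult_right fdw d2F)
  then have "((\<lambda>z. fd F z (a *\<^sub>R e)) has_derivative (\<lambda>h. a * fd (\<lambda>z. fd F z e) x h)) (at x)"
  proof (rule has_derivative_transform_within_open[OF _ V])
    fix z assume "z \<in> V"
    show "a * fd F z e = fd F z (a *\<^sub>R e)"
      using linear_frechet_derivative[OF dF[OF \<open>z \<in> V\<close>]] by (simp add: linear_scale)
  qed
  then have "dirderiv2 F (a *\<^sub>R e) (b *\<^sub>R e') x = a * fd (\<lambda>z. fd F z e) x (b *\<^sub>R e')"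
    unfolding dirderiv2_def by (simp add: fd_at)
  also have "\<dots> = a * b * dirderiv2 F e e' x"
    using linear_frechet_derivative[OF d2F] by (simp add: linear_scale dirderiv2_def)
  finally show ?thesis .
qed

lemma chart_straight:
  fixes H :: "'a::euclidean_space \<Rightarrow> real"
  assumes U: "open U" "sm U H" "p \<in> U" and e: "e \<in> Basis" "fd H p e \<noteq> 0"
    and J: "J \<subseteq> Basis" "e \<notin> J" and U1: "open U1" "p \<in> U1"
    and S: "\<And>x. x \<in> U1 \<Longrightarrow> x \<in> S \<longleftrightarrow> (x \<in> U \<and> H x = 0 \<and> (\<forall>j\<in>J. x \<bullet> j = 0))"
  shows "\<exists>W \<Psi> L. submanifold_chart S p W \<Psi> L \<and> (\<forall>v. fd H p v = 0 \<and> (\<forall>j\<in>J. v \<bullet> j = 0) \<longrightarrow> fd \<Psi> p v \<in> L)"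
proof -
  have oUU: "open (U \<inter> U1)" using U(1) U1(1) by blast
  obtain W where W: "open W" "p \<in> W" "W \<subseteq> U \<inter> U1" "inj_on (straight e H) W"
    "open (straight e H ` W)" "sm W (straight e H)" "sm (straight e H ` W) (inv_into W (straight e H))"
    using straighten[OF oUU sm_subset[OF U(2)] _ e] U(3) U1(2) by blast
  define L where "L = {y. y \<bullet> e = 0 \<and> (\<forall>j\<in>J. y \<bullet> j = 0)}"
  have sL: "subspace L" unfolding L_def subspace_def by (auto simp: inner_simps)
  have memL: "straight e H x \<in> L \<longleftrightarrow> H x = 0 \<and> (\<forall>j\<in>J. x \<bullet> j = 0)" for x
  proof -
    have "\<forall>j\<in>J. straight e H x \<bullet> j = x \<bullet> j"
    proof
      fix j assume "j \<in> J"
      then have "j \<in> Basis" "j \<noteq> e" using J by auto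
      then show "straight e H x \<bullet> j = x \<bullet> j" using straight_j[OF e(1)] by blast
    qed
    then show ?thesis unfolding L_def using straight_e[OF e(1), of H x] by simp
  qed
  have img: "straight e H ` (S \<inter> W) = L \<inter> straight e H ` W"
  proof
    show "straight e H ` (S \<inter> W) \<subseteq> L \<inter> straight e H ` W"
    proof
      fix y assume "y \<in> straight e H ` (S \<inter> W)"
      then obtain x where x: "x \<in> S" "x \<in> W" "y = straight e H x" by auto
      then have "x \<in> U1" using W(3) by auto
      then have "H x = 0 \<and> (\<forall>j\<in>J. x \<bullet> j = 0)" using S x(1) by blast
      then show "y \<in> L \<inter> straight e H ` W" using memL x by auto
    qed
    show "L \<inter> straight e H ` W \<subseteq> straight e H ` (S \<inter> W)"
    proof
      fix y assume "y \<in> L \<inter> straight e H ` W"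
      then obtain x where x: "x \<in> W" "y = straight e H x" "straight e H x \<in> L" by auto
      then have "x \<in> U1" "x \<in> U" using W(3) by auto
      then have "x \<in> S" using S memL x(3) by blast
      then show "y \<in> straight e H ` (S \<inter> W)" using x by auto
    qed
  qed
  have chart: "submanifold_chart S p W (straight e H) L"
    unfolding submanifold_chart_def smooth_on_sm using W sL img by auto
  have dH: "H differentiable at p" using sm_diff[OF U(2) U(3)] .
  have fdP: "fd (straight e H) p = Aop e (fd H p)"
    using fd_at[OF straight_has_derivative[OF fdw[OF dH]]] .
  have "fd (straight e H) p v \<in> L" if "fd H p v = 0" "\<forall>j\<in>J. v \<bullet> j = 0" for v
  proof -
    have ee: "e \<bullet> e = 1" using e(1) by simp
    have "Aop e (fd H p) v \<bullet> e = 0" unfolding Aop_def using that by (simp add: inner_simps ee)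
    moreover have "Aop e (fd H p) v \<bullet> j = 0" if "j \<in> J" for j
    proof -
      have "j \<in> Basis" "j \<noteq> e" using J that by auto
      then have "e \<bullet> j = 0" using e(1) inner_not_same_Basis by metis
      then show ?thesis unfolding Aop_def using \<open>\<forall>j\<in>J. v \<bullet> j = 0\<close> that by (simp add: inner_simps)
    qed
    ultimately show ?thesis unfolding fdP L_def by auto
  qed
  then show ?thesis using chart by blast
qed



type_synonym R4 = "real \<times> real \<times> real \<times> real"

definition G0 :: "R4 \<Rightarrow> real \<times> real" where
  "G0 = (\<lambda>p. ((fst p)\<^sup>2 + (fst (snd p))\<^sup>2 + (fst (snd (snd p)))\<^sup>2, snd (snd (snd p))))"

definition Ff :: "R4 \<Rightarrow> real" where
  "Ff = (\<lambda>p. (fst p)\<^sup>2 + (fst (snd p))\<^sup>2)"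

definition U4 :: "R4 set" where
  "U4 = {p. 0 < (fst p)\<^sup>2 + (fst (snd p))\<^sup>2 + (fst (snd (snd p)))\<^sup>2}"

definition DG0 :: "R4 \<Rightarrow> R4 \<Rightarrow> real \<times> real" where
  "DG0 p v = (2 * (fst p * fst v + fst (snd p) * fst (snd v) + fst (snd (snd p)) * fst (snd (snd v))), snd (snd (snd v)))"

lemma G0_deriv: "(G0 has_derivative DG0 p) (at p)"
  unfolding G0_def DG0_def[abs_def]
  by (auto intro!: derivative_eq_intros simp: algebra_simps)

lemma Ff_deriv: "(Ff has_derivative (\<lambda>v. 2 * (fst p * fst v + fst (snd p) * fst (snd v)))) (at p)"
  unfolding Ff_def
  by (auto intro!: derivative_eq_intros simp: algebra_simps)

lemma fd_G0: "fd G0 p = DG0 p" using fd_at[OF G0_deriv] .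
lemma fd_Ff: "fd Ff p v = 2 * (fst p * fst v + fst (snd p) * fst (snd v))" using fd_at[OF Ff_deriv] by simp

lemma bl_c1: "bounded_linear (\<lambda>p::R4. fst p)" by (rule bounded_linear_fst)
lemma bl_c2: "bounded_linear (\<lambda>p::R4. fst (snd p))"
  by (intro bounded_linear_fst_comp bounded_linear_snd_comp bounded_linear_ident)
lemma bl_c3: "bounded_linear (\<lambda>p::R4. fst (snd (snd p)))"
  by (intro bounded_linear_fst_comp bounded_linear_snd_comp bounded_linear_ident)
lemma bl_c4: "bounded_linear (\<lambda>p::R4. snd (snd (snd p)))"
  by (intro bounded_linear_fst_comp bounded_linear_snd_comp bounded_linear_ident)

lemma sm_G0: "sm UNIV G0"
proof -
  have s: "sm UNIV (\<lambda>p::R4. fst p)" "sm UNIV (\<lambda>p::R4. fst (snd p))" "sm UNIV (\<lambda>p::R4. fst (snd (snd p)))"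
    "sm UNIV (\<lambda>p::R4. snd (snd (snd p)))"
    using sm_linear bl_c1 bl_c2 bl_c3 bl_c4 by blast+
  have "sm UNIV (\<lambda>p::R4. (fst p * fst p + fst (snd p) * fst (snd p) + fst (snd (snd p)) * fst (snd (snd p)), snd (snd (snd p))))"
    by (intro sm_pair sm_add sm_mult s open_UNIV)
  then show ?thesis unfolding G0_def by (simp add: power2_eq_square)
qed

lemma sm_Ff: "sm UNIV Ff"
proof -
  have s: "sm UNIV (\<lambda>p::R4. fst p)" "sm UNIV (\<lambda>p::R4. fst (snd p))"
    using sm_linear bl_c1 bl_c2 by blast+
  have "sm UNIV (\<lambda>p::R4. fst p * fst p + fst (snd p) * fst (snd p))"
    by (intro sm_add sm_mult s open_UNIV)
  then show ?thesis unfolding Ff_def by (simp add: power2_eq_square)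
qed

lemma open_U4: "open U4"
proof -
  have "continuous_on UNIV (\<lambda>p::R4. (fst p)\<^sup>2 + (fst (snd p))\<^sup>2 + (fst (snd (snd p)))\<^sup>2)"
    by (intro continuous_intros)
  then show ?thesis unfolding U4_def
    using continuous_open_preimage[OF _ open_UNIV open_greaterThan[of 0]] by (simp add: vimage_def)
qed

lemma e_Basis: "((1,0,0,0)::R4) \<in> Basis" "((0,1,0,0)::R4) \<in> Basis" "((0,0,1,0)::R4) \<in> Basis" "((0,0,0,1)::R4) \<in> Basis"
  by (auto simp: Basis_prod_def zero_prod_def)

lemma fd_DG0: "fd (\<lambda>y. DG0 y v) p w = (2 * (fst w * fst v + fst (snd w) * fst (snd v) + fst (snd (snd w)) * fst (snd (snd v))), 0)"
proof -
  have "((\<lambda>y. DG0 y v) has_derivative (\<lambda>w. (2 * (fst w * fst v + fst (snd w) * fst (snd v) + fst (snd (snd w)) * fst (snd (snd v))), 0))) (at p)"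
    unfolding DG0_def by (auto intro!: derivative_eq_intros simp: algebra_simps)
  then show ?thesis by (simp add: fd_at)
qed

lemma fd_dFf: "fd (\<lambda>y. fd Ff y v) p w = 2 * (fst w * fst v + fst (snd w) * fst (snd v))"
proof -
  have "((\<lambda>y. 2 * (fst y * fst v + fst (snd y) * fst (snd v))) has_derivative (\<lambda>w. 2 * (fst w * fst v + fst (snd w) * fst (snd v)))) (at p)"
    by (auto intro!: derivative_eq_intros simp: algebra_simps)
  then show ?thesis by (simp add: fd_at fd_Ff)
qed

lemma lin2:
  fixes f :: "real \<times> real \<Rightarrow> real"
  assumes l: "linear f"
  shows "f (a, b) = a * f (1, 0) + b * f (0, 1)"
proof -
  have "f (a, b) = f (a *\<^sub>R (1, 0) + b *\<^sub>R (0, 1))" by simp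
  also have "\<dots> = a * f (1, 0) + b * f (0, 1)"
    using linear_add[OF l] linear_scale[OF l] by (simp only: real_scaleR_def)
  finally show ?thesis .
qed

lemma DG0_deriv2: "((\<lambda>y. DG0 y v) has_derivative (\<lambda>w. (2 * (fst w * fst v + fst (snd w) * fst (snd v) + fst (snd (snd w)) * fst (snd (snd v))), 0))) (at p)"
  unfolding DG0_def by (auto intro!: derivative_eq_intros simp: algebra_simps)

lemma fd_G0_fun: "(\<lambda>y. fd G0 y v) = (\<lambda>y. DG0 y v)" by (simp add: fd_G0)

locale L61 =
  fixes h :: "real \<times> real \<Rightarrow> real" and r0 :: real
  assumes smooth: "smooth_on ({0<..} \<times> UNIV) h"
    and regular: "\<And>\<rho> t. \<rho> > 0 \<Longrightarrow> h (\<rho>, t) = 0 \<Longrightarrow> (dirderiv h (1, 0) (\<rho>, t), dirderiv h (0, 1) (\<rho>, t)) \<noteq> (0, 0)"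
    and r0pos: "r0 > 0" and r0set: "{\<rho>. \<rho> > 0 \<and> h (\<rho>, 0) = 0} = {r0}"
    and ht_zero: "{(\<rho>, t). \<rho> > 0 \<and> h (\<rho>, t) = 0 \<and> dirderiv h (0, 1) (\<rho>, t) = 0} = {(r0, 0)}"
    and transv: "\<And>\<rho> t. \<rho> > 0 \<Longrightarrow> h (\<rho>, t) = 0 \<Longrightarrow> \<rho> * dirderiv h (1, 0) (\<rho>, t) - t * dirderiv h (0, 1) (\<rho>, t) > 0"
    and htt: "dirderiv2 h (0, 1) (0, 1) (r0, 0) < 0"
begin

definition "D2 = ({0<..} \<times> UNIV :: (real \<times> real) set)"
definition "hr x = fd h x (1, 0)"
definition "ht x = fd h x (0, 1)"
definition "Hf p = h (G0 p)"
definition "M = {p \<in> U4. Hf p = 0}"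

lemma oD2: "open D2" unfolding D2_def by (intro open_Times open_greaterThan open_UNIV)

lemma smh: "sm D2 h" using smooth unfolding D2_def smooth_on_sm by simp

lemma dh: "x \<in> D2 \<Longrightarrow> h differentiable at x" using sm_diff[OF smh] .

lemma G0U4: "p \<in> U4 \<Longrightarrow> G0 p \<in> D2" unfolding D2_def U4_def G0_def by auto

lemma smHf: "sm U4 Hf"
proof -
  have "sm U4 (\<lambda>p. h (G0 p))"
    by (rule sm_comp[OF open_U4 oD2 sm_subset[OF sm_G0]]) (use G0U4 smh in auto)
  then show ?thesis unfolding Hf_def[abs_def] .
qed

lemma lin_h: "x \<in> D2 \<Longrightarrow> fd h x (a, b) = a * hr x + b * ht x"
  unfolding hr_def ht_def by (rule lin2[OF linear_frechet_derivative[OF dh]])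

lemma fd_Hf: "p \<in> U4 \<Longrightarrow> fd Hf p v =
   2 * (fst p * fst v + fst (snd p) * fst (snd v) + fst (snd (snd p)) * fst (snd (snd v))) * hr (G0 p)
   + snd (snd (snd v)) * ht (G0 p)"
proof -
  assume p: "p \<in> U4"
  have dG: "G0 differentiable at p" using G0_deriv[of p] unfolding differentiable_def by blast
  have "fd (\<lambda>x. h (G0 x)) p = fd h (G0 p) \<circ> fd G0 p"
    using frechet_derivative_compose[OF dG dh[OF G0U4[OF p]]] by (simp add: o_def)
  then have "fd Hf p v = fd h (G0 p) (DG0 p v)" unfolding Hf_def[abs_def] fd_G0 by simp
  also have "\<dots> = 2 * (fst p * fst v + fst (snd p) * fst (snd v) + fst (snd (snd p)) * fst (snd (snd v))) * hr (G0 p)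
   + snd (snd (snd v)) * ht (G0 p)" unfolding DG0_def lin_h[OF G0U4[OF p]] by simp
  finally show ?thesis .
qed

lemma dHf: "p \<in> U4 \<Longrightarrow> Hf differentiable at p" using sm_diff[OF smHf] .

lemma G0_pair: "G0 p = ((fst p)\<^sup>2 + (fst (snd p))\<^sup>2 + (fst (snd (snd p)))\<^sup>2, snd (snd (snd p)))"
  unfolding G0_def by simp

lemma regularM: "p \<in> M \<Longrightarrow> hr (G0 p) \<noteq> 0 \<or> ht (G0 p) \<noteq> 0"
proof -
  assume p: "p \<in> M"
  then have "fst (G0 p) > 0" "h (fst (G0 p), snd (G0 p)) = 0"
    unfolding M_def U4_def Hf_def G0_pair by auto
  from regular[OF this] show ?thesis unfolding hr_def ht_def dirderiv_def by simp
qed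

lemma h_r0: "h (r0, 0) = 0"
proof -
  have "r0 \<in> {\<rho>. \<rho> > 0 \<and> h (\<rho>, 0) = 0}" using r0set by simp
  then show ?thesis by simp
qed
lemma ht_r0: "ht (r0, 0) = 0"
proof -
  have "(r0, 0) \<in> {(\<rho>, t). \<rho> > 0 \<and> h (\<rho>, t) = 0 \<and> dirderiv h (0, 1) (\<rho>, t) = 0}" using ht_zero by simp
  then show ?thesis unfolding ht_def dirderiv_def by simp
qed
lemma hr_r0: "hr (r0, 0) > 0"
proof -
  have "r0 * hr (r0, 0) > 0" using transv[OF r0pos h_r0] unfolding hr_def ht_def dirderiv_def by simp
  then show ?thesis using r0pos by (simp add: zero_less_mult_iff)
qed
lemma ht_unique: "\<rho> > 0 \<Longrightarrow> h (\<rho>, t) = 0 \<Longrightarrow> ht (\<rho>, t) = 0 \<Longrightarrow> \<rho> = r0 \<and> t = 0"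
proof -
  assume a: "\<rho> > 0" "h (\<rho>, t) = 0" "ht (\<rho>, t) = 0"
  have "(\<rho>, t) \<in> {(\<rho>, t). \<rho> > 0 \<and> h (\<rho>, t) = 0 \<and> dirderiv h (0, 1) (\<rho>, t) = 0}"
    using a unfolding ht_def dirderiv_def by simp
  then have "(\<rho>, t) \<in> {(r0, 0)}" using ht_zero by simp
  then show ?thesis by simp
qed

lemma inner_e:
  fixes q :: R4
  shows "q \<bullet> (1,0,0,0) = fst q" "q \<bullet> (0,1,0,0) = fst (snd q)" "q \<bullet> (0,0,1,0) = fst (snd (snd q))"
    "q \<bullet> (0,0,0,1) = snd (snd (snd q))"
  by (cases q; simp add: inner_prod_def)+

lemma fd_Hf4: "(x, y, z, t) \<in> U4 \<Longrightarrow> fd Hf (x, y, z, t) (a, b, c, d) =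
   2 * (x * a + y * b + z * c) * hr (x\<^sup>2 + y\<^sup>2 + z\<^sup>2, t) + d * ht (x\<^sup>2 + y\<^sup>2 + z\<^sup>2, t)"
  using fd_Hf[of "(x, y, z, t)" "(a, b, c, d)"] by (simp add: G0_def)

lemma U4_4: "(x, y, z, t) \<in> U4 \<longleftrightarrow> 0 < x\<^sup>2 + y\<^sup>2 + z\<^sup>2" by (simp add: U4_def)
lemma M_4: "(x, y, z, t) \<in> M \<longleftrightarrow> 0 < x\<^sup>2 + y\<^sup>2 + z\<^sup>2 \<and> h (x\<^sup>2 + y\<^sup>2 + z\<^sup>2, t) = 0"
  by (simp add: M_def U4_def Hf_def G0_def)

lemma exists_e: "p \<in> M \<Longrightarrow> \<exists>e\<in>Basis. fd Hf p e \<noteq> 0"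
proof -
  assume pM: "p \<in> M"
  obtain x y z t where p: "p = (x, y, z, t)" by (cases p)
  have pU: "(x, y, z, t) \<in> U4" using pM p by (simp add: M_def)
  have reg: "hr (x\<^sup>2 + y\<^sup>2 + z\<^sup>2, t) \<noteq> 0 \<or> ht (x\<^sup>2 + y\<^sup>2 + z\<^sup>2, t) \<noteq> 0"
    using regularM[OF pM] p by (simp add: G0_def)
  have pos: "0 < x\<^sup>2 + y\<^sup>2 + z\<^sup>2" using pU by (simp add: U4_def)
  show ?thesis
  proof (cases "ht (x\<^sup>2 + y\<^sup>2 + z\<^sup>2, t) \<noteq> 0")
    case True
    then show ?thesis using e_Basis(4) fd_Hf4[OF pU, of 0 0 0 1] p by force
  next
    case False
    then have R: "hr (x\<^sup>2 + y\<^sup>2 + z\<^sup>2, t) \<noteq> 0" using reg by simp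
    have "x \<noteq> 0 \<or> y \<noteq> 0 \<or> z \<noteq> 0" using pos by auto
    then show ?thesis
    proof (elim disjE)
      assume "x \<noteq> 0" then show ?thesis using e_Basis(1) fd_Hf4[OF pU, of 1 0 0 0] p R by force
    next
      assume "y \<noteq> 0" then show ?thesis using e_Basis(2) fd_Hf4[OF pU, of 0 1 0 0] p R by force
    next
      assume "z \<noteq> 0" then show ?thesis using e_Basis(3) fd_Hf4[OF pU, of 0 0 1 0] p R by force
    qed
  qed
qed

lemma chartM: "p \<in> M \<Longrightarrow> \<exists>W \<Psi> L. submanifold_chart M p W \<Psi> L \<and> (\<forall>v. fd Hf p v = 0 \<longrightarrow> fd \<Psi> p v \<in> L)"
proof -
  assume pM: "p \<in> M"
  obtain e where e: "e \<in> Basis" "fd Hf p e \<noteq> 0" using exists_e[OF pM] by blast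
  have pU: "p \<in> U4" using pM by (simp add: M_def)
  show ?thesis
    using chart_straight[OF open_U4 smHf pU e, of "{}" UNIV M] by (simp add: M_def)
qed

lemma embM: "embedded_submanifold M"
  unfolding embedded_submanifold_def using chartM by blast

lemma TM: "p \<in> M \<Longrightarrow> tangent_space M p = {v. fd Hf p v = 0}"
proof
  assume pM: "p \<in> M"
  have pU: "p \<in> U4" using pM by (simp add: M_def)
  show "tangent_space M p \<subseteq> {v. fd Hf p v = 0}"
    using tangent_zero[OF pM open_U4 pU dHf[OF pU], of ] by (auto simp: M_def)
  show "{v. fd Hf p v = 0} \<subseteq> tangent_space M p"
    using chartM[OF pM] tangent_by_chart by blast
qed

definition "C1 = {p \<in> M. fst p = 0 \<and> fst (snd p) = 0}"
definition "C2 = {p::R4. fst (snd (snd p)) = 0 \<and> snd (snd (snd p)) = 0 \<and> (fst p)\<^sup>2 + (fst (snd p))\<^sup>2 = r0}"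

lemma fd_Ff4: "fd Ff (x, y, z, t) (a, b, c, d) = 2 * (x * a + y * b)" by (simp add: fd_Ff)

lemma crit_eq: "crit_set Ff M = C1 \<union> C2"
proof (intro equalityI subsetI)
  fix p assume pc: "p \<in> crit_set Ff M"
  then have pM: "p \<in> M" and cr: "\<And>v. fd Hf p v = 0 \<Longrightarrow> fd Ff p v = 0"
    unfolding crit_set_def using TM by auto
  obtain x y z t where p: "p = (x, y, z, t)" by (cases p)
  have pU: "(x, y, z, t) \<in> U4" using pM p by (simp add: M_def)
  define R where "R = hr (x\<^sup>2 + y\<^sup>2 + z\<^sup>2, t)"
  define T where "T = ht (x\<^sup>2 + y\<^sup>2 + z\<^sup>2, t)"
  show "p \<in> C1 \<union> C2"
  proof (cases "x = 0 \<and> y = 0")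
    case True
    then show ?thesis using pM p by (simp add: C1_def)
  next
    case False
    define s where "s = x\<^sup>2 + y\<^sup>2"
    have s: "s > 0" using False unfolding s_def by (simp add: sum_power2_gt_zero_iff)
    have "fd Hf p (T * x, T * y, 0, - 2 * R * s) = 0"
      unfolding p fd_Hf4[OF pU] R_def[symmetric] T_def[symmetric] s_def by (simp add: algebra_simps power2_eq_square)
    then have "fd Ff p (T * x, T * y, 0, - 2 * R * s) = 0" by (rule cr)
    then have "2 * T * s = 0" unfolding p fd_Ff4 s_def by (simp add: algebra_simps power2_eq_square)
    then have T0: "T = 0" using s by simp
    have "fd Hf p (z * x, z * y, - s, 0) = 0"
      unfolding p fd_Hf4[OF pU] R_def[symmetric] T_def[symmetric] s_def by (simp add: algebra_simps power2_eq_square)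
    then have "fd Ff p (z * x, z * y, - s, 0) = 0" by (rule cr)
    then have "2 * z * s = 0" unfolding p fd_Ff4 s_def by (simp add: algebra_simps power2_eq_square)
    then have z0: "z = 0" using s by simp
    have "0 < x\<^sup>2 + y\<^sup>2 + z\<^sup>2" "h (x\<^sup>2 + y\<^sup>2 + z\<^sup>2, t) = 0" using pM p by (auto simp: M_4)
    from ht_unique[OF this T0[unfolded T_def]] z0
    show ?thesis using p by (simp add: C2_def)
  qed
next
  fix p assume "p \<in> C1 \<union> C2"
  then show "p \<in> crit_set Ff M"
  proof
    assume pC: "p \<in> C1"
    then have "p \<in> M" by (simp add: C1_def)
    moreover have "fd Ff p v = 0" for v using pC by (simp add: C1_def fd_Ff)
    ultimately show ?thesis unfolding crit_set_def by auto
  next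
    assume pC: "p \<in> C2"
    obtain x y z t where p: "p = (x, y, z, t)" by (cases p)
    have pc: "z = 0" "t = 0" "x\<^sup>2 + y\<^sup>2 = r0" using pC p by (auto simp: C2_def)
    have pU: "(x, y, z, t) \<in> U4" using pc r0pos by (simp add: U4_def)
    have pM: "p \<in> M" using pc r0pos h_r0 p by (simp add: M_4)
    have "fd Ff p v = 0" if "v \<in> tangent_space M p" for v
    proof -
      obtain a b c d where v: "v = (a, b, c, d)" by (cases v)
      have "fd Hf p v = 0" using that TM[OF pM] by simp
      then have "2 * (x * a + y * b) * hr (r0, 0) = 0"
        unfolding p v fd_Hf4[OF pU] using pc ht_r0 by simp
      then have "x * a + y * b = 0" using hr_r0 by simp
      then show ?thesis unfolding p v fd_Ff4 by simp
    qed
    then show ?thesis using pM unfolding crit_set_def by auto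
  qed
qed

definition "Kf = (\<lambda>q::R4. (fst q)\<^sup>2 + (fst (snd q))\<^sup>2 - r0)"

lemma Kf_deriv: "(Kf has_derivative (\<lambda>v. 2 * (fst p * fst v + fst (snd p) * fst (snd v)))) (at p)"
  unfolding Kf_def by (auto intro!: derivative_eq_intros simp: algebra_simps)

lemma fd_Kf: "fd Kf p v = 2 * (fst p * fst v + fst (snd p) * fst (snd v))" using fd_at[OF Kf_deriv] by simp

lemma sm_Kf: "sm UNIV Kf"
proof -
  have s: "sm UNIV (\<lambda>p::R4. fst p)" "sm UNIV (\<lambda>p::R4. fst (snd p))"
    using sm_linear bl_c1 bl_c2 by blast+
  have "sm UNIV (\<lambda>p::R4. fst p * fst p + fst (snd p) * fst (snd p) - r0)"
    by (intro sm_diff' sm_add sm_mult s open_UNIV sm_const)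
  then show ?thesis unfolding Kf_def by (simp add: power2_eq_square)
qed

lemma fd_lin: "bounded_linear f \<Longrightarrow> fd f p v = f v"
  using fd_at[OF bounded_linear_imp_has_derivative] by metis

definition "U1a = {q::R4. (fst q)\<^sup>2 + (fst (snd q))\<^sup>2 < r0}"
definition "U1b = {q::R4. 0 < (fst q)\<^sup>2 + (fst (snd q))\<^sup>2}"

lemma open_U1a: "open U1a"
proof -
  have "continuous_on UNIV (\<lambda>p::R4. (fst p)\<^sup>2 + (fst (snd p))\<^sup>2)" by (intro continuous_intros)
  then show ?thesis unfolding U1a_def
    using continuous_open_preimage[OF _ open_UNIV open_lessThan[of r0]] by (simp add: vimage_def)
qed

lemma open_U1b: "open U1b"
proof -
  have "continuous_on UNIV (\<lambda>p::R4. (fst p)\<^sup>2 + (fst (snd p))\<^sup>2)" by (intro continuous_intros)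
  then show ?thesis unfolding U1b_def
    using continuous_open_preimage[OF _ open_UNIV open_greaterThan[of 0]] by (simp add: vimage_def)
qed

lemma C1_U1a: "q \<in> U1a \<Longrightarrow> q \<in> C1 \<union> C2 \<longleftrightarrow> q \<in> U4 \<and> Hf q = 0 \<and> fst q = 0 \<and> fst (snd q) = 0"
  unfolding U1a_def C1_def C2_def M_def by auto

lemma C2_U1b: "q \<in> U1b \<Longrightarrow> q \<in> C1 \<union> C2 \<longleftrightarrow> Kf q = 0 \<and> fst (snd (snd q)) = 0 \<and> snd (snd (snd q)) = 0"
  unfolding U1b_def C1_def C2_def Kf_def by auto

lemma e_neq: "((1,0,0,0)::R4) \<noteq> (0,0,1,0)" "((0,1,0,0)::R4) \<noteq> (0,0,1,0)"
  "((1,0,0,0)::R4) \<noteq> (0,0,0,1)" "((0,1,0,0)::R4) \<noteq> (0,0,0,1)" by simp_all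

lemma chartC1: "p \<in> C1 \<Longrightarrow> \<exists>W \<Psi> L. submanifold_chart (C1 \<union> C2) p W \<Psi> L \<and>
   (\<forall>v. fd Hf p v = 0 \<and> fst v = 0 \<and> fst (snd v) = 0 \<longrightarrow> fd \<Psi> p v \<in> L)"
proof -
  assume pC: "p \<in> C1"
  obtain x y z t where p: "p = (x, y, z, t)" by (cases p)
  have pM: "p \<in> M" and xy: "x = 0" "y = 0" using pC p by (auto simp: C1_def)
  have pU: "(x, y, z, t) \<in> U4" using pM p by (simp add: M_def)
  then have z: "z \<noteq> 0" using xy by (simp add: U4_def)
  have pU1: "p \<in> U1a" using p xy r0pos by (simp add: U1a_def)
  have reg: "hr (x\<^sup>2 + y\<^sup>2 + z\<^sup>2, t) \<noteq> 0 \<or> ht (x\<^sup>2 + y\<^sup>2 + z\<^sup>2, t) \<noteq> 0"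
    using regularM[OF pM] p by (simp add: G0_def)
  obtain e where e: "e \<in> Basis" "fd Hf p e \<noteq> 0" "e \<notin> {(1,0,0,0), (0,1,0,0)}"
  proof (cases "ht (x\<^sup>2 + y\<^sup>2 + z\<^sup>2, t) \<noteq> 0")
    case True
    then show ?thesis using that[of "(0,0,0,1)"] e_Basis(4) fd_Hf4[OF pU, of 0 0 0 1] p by simp
  next
    case False
    then show ?thesis using that[of "(0,0,1,0)"] e_Basis(3) fd_Hf4[OF pU, of 0 0 1 0] p reg z by simp
  qed
  have J: "{(1,0,0,0), (0,1,0,0)} \<subseteq> (Basis :: R4 set)" using e_Basis by auto
  from chart_straight[OF open_U4 smHf _ e(1,2) J e(3) open_U1a pU1, of "C1 \<union> C2"]
  show ?thesis using pU p C1_U1a by (simp add: inner_e)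
qed

lemma chartC2: "p \<in> C2 \<Longrightarrow> \<exists>W \<Psi> L. submanifold_chart (C1 \<union> C2) p W \<Psi> L \<and>
   (\<forall>v. fd Kf p v = 0 \<and> fst (snd (snd v)) = 0 \<and> snd (snd (snd v)) = 0 \<longrightarrow> fd \<Psi> p v \<in> L)"
proof -
  assume pC: "p \<in> C2"
  obtain x y z t where p: "p = (x, y, z, t)" by (cases p)
  have pc: "z = 0" "t = 0" "x\<^sup>2 + y\<^sup>2 = r0" using pC p by (auto simp: C2_def)
  have pU1: "p \<in> U1b" using p pc r0pos by (simp add: U1b_def)
  have xy: "x \<noteq> 0 \<or> y \<noteq> 0" using pc r0pos by auto
  obtain e where e: "e \<in> Basis" "fd Kf p e \<noteq> 0" "e \<notin> {(0,0,1,0), (0,0,0,1)}"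
  proof (cases "x \<noteq> 0")
    case True
    then show ?thesis using that[of "(1,0,0,0)"] e_Basis(1) p by (simp add: fd_Kf)
  next
    case False
    then show ?thesis using that[of "(0,1,0,0)"] e_Basis(2) p xy by (simp add: fd_Kf)
  qed
  have J: "{(0,0,1,0), (0,0,0,1)} \<subseteq> (Basis :: R4 set)" using e_Basis by auto
  from chart_straight[OF open_UNIV sm_Kf _ e(1,2) J e(3) open_U1b pU1, of "C1 \<union> C2"]
  show ?thesis using p C2_U1b by (simp add: inner_e)
qed

lemma embC: "embedded_submanifold (C1 \<union> C2)"
  unfolding embedded_submanifold_def using chartC1 chartC2 by blast

lemma TC1: "p \<in> C1 \<Longrightarrow> tangent_space (C1 \<union> C2) p = {v. fd Hf p v = 0 \<and> fst v = 0 \<and> fst (snd v) = 0}"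
proof
  assume pC: "p \<in> C1"
  have pS: "p \<in> C1 \<union> C2" using pC by simp
  have pU: "p \<in> U4" using pC by (simp add: C1_def M_def)
  have pU1: "p \<in> U1a" using pC r0pos by (simp add: C1_def U1a_def)
  have oU: "open (U1a \<inter> U4)" using open_U1a open_U4 by blast
  have pUU: "p \<in> U1a \<inter> U4" using pU pU1 by simp
  show "{v. fd Hf p v = 0 \<and> fst v = 0 \<and> fst (snd v) = 0} \<subseteq> tangent_space (C1 \<union> C2) p"
    using chartC1[OF pC] tangent_by_chart by blast
  show "tangent_space (C1 \<union> C2) p \<subseteq> {v. fd Hf p v = 0 \<and> fst v = 0 \<and> fst (snd v) = 0}"
  proof
    fix v assume v: "v \<in> tangent_space (C1 \<union> C2) p"
    have "fd Hf p v = 0"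
      by (rule tangent_zero[OF pS oU pUU dHf[OF pU] _ v]) (use C1_U1a in auto)
    moreover have "fd (\<lambda>q::R4. fst q) p v = 0"
      by (rule tangent_zero[OF pS oU pUU bounded_linear_imp_differentiable[OF bl_c1] _ v]) (use C1_U1a in auto)
    moreover have "fd (\<lambda>q::R4. fst (snd q)) p v = 0"
      by (rule tangent_zero[OF pS oU pUU bounded_linear_imp_differentiable[OF bl_c2] _ v]) (use C1_U1a in auto)
    ultimately show "v \<in> {v. fd Hf p v = 0 \<and> fst v = 0 \<and> fst (snd v) = 0}"
      using fd_lin[OF bl_c1] fd_lin[OF bl_c2] by simp
  qed
qed

lemma TC2: "p \<in> C2 \<Longrightarrow> tangent_space (C1 \<union> C2) p = {v. fd Kf p v = 0 \<and> fst (snd (snd v)) = 0 \<and> snd (snd (snd v)) = 0}"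
proof
  assume pC: "p \<in> C2"
  have pS: "p \<in> C1 \<union> C2" using pC by simp
  have pU1: "p \<in> U1b" using pC r0pos by (simp add: C2_def U1b_def)
  show "{v. fd Kf p v = 0 \<and> fst (snd (snd v)) = 0 \<and> snd (snd (snd v)) = 0} \<subseteq> tangent_space (C1 \<union> C2) p"
    using chartC2[OF pC] tangent_by_chart by blast
  show "tangent_space (C1 \<union> C2) p \<subseteq> {v. fd Kf p v = 0 \<and> fst (snd (snd v)) = 0 \<and> snd (snd (snd v)) = 0}"
  proof
    fix v assume v: "v \<in> tangent_space (C1 \<union> C2) p"
    have dK: "Kf differentiable at p" using Kf_deriv[of p] unfolding differentiable_def by blast
    have "fd Kf p v = 0"
      by (rule tangent_zero[OF pS open_U1b pU1 dK _ v]) (use C2_U1b in auto)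
    moreover have "fd (\<lambda>q::R4. fst (snd (snd q))) p v = 0"
      by (rule tangent_zero[OF pS open_U1b pU1 bounded_linear_imp_differentiable[OF bl_c3] _ v]) (use C2_U1b in auto)
    moreover have "fd (\<lambda>q::R4. snd (snd (snd q))) p v = 0"
      by (rule tangent_zero[OF pS open_U1b pU1 bounded_linear_imp_differentiable[OF bl_c4] _ v]) (use C2_U1b in auto)
    ultimately show "v \<in> {v. fd Kf p v = 0 \<and> fst (snd (snd v)) = 0 \<and> snd (snd (snd v)) = 0}"
      using fd_lin[OF bl_c3] fd_lin[OF bl_c4] by simp
  qed
qed

lemma dirderiv2_Ff: "dirderiv2 Ff v w p = 2 * (fst w * fst v + fst (snd w) * fst (snd v))"
  unfolding dirderiv2_def by (rule fd_dFf)

lemma hess_Hf_C2: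
  assumes pC: "p \<in> C2" and v: "fd Hf p v = 0" and w: "fd Hf p w = 0"
  shows "dirderiv2 Hf v w p = snd (snd (snd v)) * snd (snd (snd w)) * dirderiv2 h (0, 1) (0, 1) (r0, 0)
      + 2 * (fst w * fst v + fst (snd w) * fst (snd v) + fst (snd (snd w)) * fst (snd (snd v))) * hr (r0, 0)"
proof -
  obtain x y z t where p: "p = (x, y, z, t)" by (cases p)
  have pc: "z = 0" "t = 0" "x\<^sup>2 + y\<^sup>2 = r0" using pC p by (auto simp: C2_def)
  have pU: "(x, y, z, t) \<in> U4" using pc r0pos by (simp add: U4_def)
  have G0p: "G0 p = (r0, 0)" using p pc by (simp add: G0_def)
  have G0D: "G0 p \<in> D2" using G0U4 pU p by simp
  obtain a b c d where vv: "v = (a, b, c, d)" by (cases v)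
  have xa: "x * a + y * b = 0"
  proof -
    have "2 * (x * a + y * b) * hr (r0, 0) = 0"
      using v unfolding p vv fd_Hf4[OF pU] using pc ht_r0 by simp
    then show ?thesis using hr_r0 by simp
  qed
  obtain a' b' c' d' where ww: "w = (a', b', c', d')" by (cases w)
  have xa': "x * a' + y * b' = 0"
  proof -
    have "2 * (x * a' + y * b') * hr (r0, 0) = 0"
      using w unfolding p ww fd_Hf4[OF pU] using pc ht_r0 by simp
    then show ?thesis using hr_r0 by simp
  qed
  have d2h: "\<And>e. (\<lambda>x. fd h x e) differentiable at (G0 p)" using sm_diff[OF sm_deriv[OF smh] G0D] .
  have dG0: "\<And>y. y \<in> UNIV \<Longrightarrow> G0 differentiable at y" using G0_deriv unfolding differentiable_def by blast
  have d2G0: "(\<lambda>y. fd G0 y v) differentiable at p"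
    unfolding fd_G0_fun using DG0_deriv2 unfolding differentiable_def by blast
  have hc: "((\<lambda>y. fd (\<lambda>x. h (G0 x)) y v) has_derivative
           (\<lambda>u'. dirderiv2 h (fd G0 p v) (fd G0 p u') (G0 p) + fd h (G0 p) (dirderiv2 G0 v u' p))) (at p)"
    by (rule hess_chain[OF oD2 G0D dh d2h open_UNIV UNIV_I dG0 d2G0])
  have e1: "dirderiv2 Hf v w p = fd (\<lambda>y. fd (\<lambda>x. h (G0 x)) y v) p w"
    by (simp add: dirderiv2_def Hf_def[abs_def])
  have "dirderiv2 Hf v w p = dirderiv2 h (fd G0 p v) (fd G0 p w) (G0 p) + fd h (G0 p) (dirderiv2 G0 v w p)"
    unfolding e1 using fd_at[OF hc] by simp
  also have "fd G0 p v = d *\<^sub>R (0, 1)" unfolding fd_G0 DG0_def p vv using xa pc by simp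
  also have "fd G0 p w = snd (snd (snd w)) *\<^sub>R (0, 1)" unfolding fd_G0 DG0_def p ww using xa' pc by simp
  also have "dirderiv2 h (d *\<^sub>R (0, 1)) (snd (snd (snd w)) *\<^sub>R (0, 1)) (G0 p) = d * snd (snd (snd w)) * dirderiv2 h (0, 1) (0, 1) (G0 p)"
    by (rule dirderiv2_scale[OF oD2 G0D dh d2h])
  also have "dirderiv2 G0 v w p = (2 * (fst w * fst v + fst (snd w) * fst (snd v) + fst (snd (snd w)) * fst (snd (snd v))), 0)"
    unfolding dirderiv2_def fd_G0_fun using fd_at[OF DG0_deriv2] by simp
  also have "fd h (G0 p) (2 * (fst w * fst v + fst (snd w) * fst (snd v) + fst (snd (snd w)) * fst (snd (snd v))), 0)
     = 2 * (fst w * fst v + fst (snd w) * fst (snd v) + fst (snd (snd w)) * fst (snd (snd v))) * hr (r0, 0)"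
    using lin_h[OF G0D] G0p by simp
  finally show ?thesis using vv G0p by simp
qed

lemma zH: "x \<in> M \<Longrightarrow> x \<in> U4 \<Longrightarrow> Hf x = 0" by (simp add: M_def)

lemma MB_C1:
  assumes pC: "p \<in> C1" and c: "submanifold_chart M p W \<Psi> L" and v: "v \<in> tangent_space M p"
  shows "(\<forall>w\<in>tangent_space M p. dirderiv2 (Ff \<circ> inv_into W \<Psi>) (fd \<Psi> p v) (fd \<Psi> p w) (\<Psi> p) = 0)
     \<longleftrightarrow> v \<in> tangent_space (C1 \<union> C2) p"
proof -
  have pM: "p \<in> M" using pC by (simp add: C1_def)
  have pU: "p \<in> U4" using pM by (simp add: M_def)
  obtain x y z t where p: "p = (x, y, z, t)" by (cases p)
  have xy: "x = 0" "y = 0" using pC p by (auto simp: C1_def)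
  have lam: "\<And>a. fd Ff p a = 0 * fd Hf p a" using xy p by (simp add: fd_Ff)
  have Q: "dirderiv2 (Ff \<circ> inv_into W \<Psi>) (fd \<Psi> p v) (fd \<Psi> p w) (\<Psi> p) = 2 * (fst w * fst v + fst (snd w) * fst (snd v))"
    if w: "w \<in> tangent_space M p" for w
    using chart_hessian[OF c pM open_U4 pU smHf zH sm_Ff lam tangent_in_L[OF c pM v] tangent_in_L[OF c pM w]]
    by (simp add: dirderiv2_Ff)
  have TMp: "tangent_space M p = {v. fd Hf p v = 0}" using TM[OF pM] .
  have pU': "(x, y, z, t) \<in> U4" using pU p by simp
  have e1: "(1,0,0,0) \<in> tangent_space M p" "(0,1,0,0) \<in> tangent_space M p"
    unfolding TMp using fd_Hf4[OF pU'] p xy by simp_all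
  have vM: "fd Hf p v = 0" using v TMp by simp
  show ?thesis
  proof
    assume H: "\<forall>w\<in>tangent_space M p. dirderiv2 (Ff \<circ> inv_into W \<Psi>) (fd \<Psi> p v) (fd \<Psi> p w) (\<Psi> p) = 0"
    have "fst v = 0" using H e1(1) Q[OF e1(1)] by simp
    moreover have "fst (snd v) = 0" using H e1(2) Q[OF e1(2)] by simp
    ultimately show "v \<in> tangent_space (C1 \<union> C2) p" using TC1[OF pC] vM by simp
  next
    assume "v \<in> tangent_space (C1 \<union> C2) p"
    then have "fst v = 0" "fst (snd v) = 0" using TC1[OF pC] by auto
    then show "\<forall>w\<in>tangent_space M p. dirderiv2 (Ff \<circ> inv_into W \<Psi>) (fd \<Psi> p v) (fd \<Psi> p w) (\<Psi> p) = 0"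
      using Q by simp
  qed
qed

lemma MB_C2:
  assumes pC: "p \<in> C2" and c: "submanifold_chart M p W \<Psi> L" and v: "v \<in> tangent_space M p"
  shows "(\<forall>w\<in>tangent_space M p. dirderiv2 (Ff \<circ> inv_into W \<Psi>) (fd \<Psi> p v) (fd \<Psi> p w) (\<Psi> p) = 0)
     \<longleftrightarrow> v \<in> tangent_space (C1 \<union> C2) p"
proof -
  obtain x y z t where p: "p = (x, y, z, t)" by (cases p)
  have pc: "z = 0" "t = 0" "x\<^sup>2 + y\<^sup>2 = r0" using pC p by (auto simp: C2_def)
  have pU': "(x, y, z, t) \<in> U4" using pc r0pos by (simp add: U4_def)
  have pU: "p \<in> U4" using pU' p by simp
  have pM: "p \<in> M" using pc r0pos h_r0 p by (simp add: M_4)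
  define R where "R = hr (r0, 0)"
  define T2 where "T2 = dirderiv2 h (0, 1) (0, 1) (r0, 0)"
  have R: "R > 0" using hr_r0 R_def by simp
  have T2: "T2 \<noteq> 0" using htt T2_def by simp
  have fdH: "fd Hf p a = 2 * (x * fst a + y * fst (snd a)) * R" for a
  proof -
    obtain a1 a2 a3 a4 where "a = (a1, a2, a3, a4)" by (cases a)
    then show ?thesis using fd_Hf4[OF pU', of a1 a2 a3 a4] p pc ht_r0 R_def by simp
  qed
  have lam: "fd Ff p a = inverse R * fd Hf p a" for a
  proof -
    have "fd Ff p a = 2 * (x * fst a + y * fst (snd a))" using p by (simp add: fd_Ff)
    then show ?thesis unfolding fdH using R by simp
  qed
  have TMp: "tangent_space M p = {v. fd Hf p v = 0}" using TM[OF pM] .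
  have Q: "dirderiv2 (Ff \<circ> inv_into W \<Psi>) (fd \<Psi> p v) (fd \<Psi> p w) (\<Psi> p)
      = - 2 * (fst (snd (snd w)) * fst (snd (snd v))) - inverse R * (snd (snd (snd v)) * snd (snd (snd w)) * T2)"
    if w: "w \<in> tangent_space M p" for w
  proof -
    have vw: "fd Hf p v = 0" "fd Hf p w = 0" using v w TMp by auto
    have "dirderiv2 (Ff \<circ> inv_into W \<Psi>) (fd \<Psi> p v) (fd \<Psi> p w) (\<Psi> p) = dirderiv2 Ff v w p - inverse R * dirderiv2 Hf v w p"
      by (rule chart_hessian[OF c pM open_U4 pU smHf zH sm_Ff lam tangent_in_L[OF c pM v] tangent_in_L[OF c pM w]])
    also have "\<dots> = - 2 * (fst (snd (snd w)) * fst (snd (snd v))) - inverse R * (snd (snd (snd v)) * snd (snd (snd w)) * T2)"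
      unfolding dirderiv2_Ff hess_Hf_C2[OF pC vw] R_def[symmetric] T2_def[symmetric]
      using R by (simp add: field_simps)
    finally show ?thesis .
  qed
  have e3: "(0,0,1,0) \<in> tangent_space M p" "(0,0,0,1) \<in> tangent_space M p"
    unfolding TMp using fdH by simp_all
  have vM: "x * fst v + y * fst (snd v) = 0" using v TMp fdH R by simp
  show ?thesis
  proof
    assume H: "\<forall>w\<in>tangent_space M p. dirderiv2 (Ff \<circ> inv_into W \<Psi>) (fd \<Psi> p v) (fd \<Psi> p w) (\<Psi> p) = 0"
    have "fst (snd (snd v)) = 0" using H e3(1) Q[OF e3(1)] by simp
    moreover have "snd (snd (snd v)) = 0" using H e3(2) Q[OF e3(2)] R T2 by simp
    ultimately show "v \<in> tangent_space (C1 \<union> C2) p" using TC2[OF pC] vM p by (simp add: fd_Kf)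
  next
    assume "v \<in> tangent_space (C1 \<union> C2) p"
    then have "fst (snd (snd v)) = 0" "snd (snd (snd v)) = 0" using TC2[OF pC] by auto
    then show "\<forall>w\<in>tangent_space M p. dirderiv2 (Ff \<circ> inv_into W \<Psi>) (fd \<Psi> p v) (fd \<Psi> p w) (\<Psi> p) = 0"
      using Q by simp
  qed
qed

lemma MB: "morse_bott_on M Ff"
  unfolding morse_bott_on_def crit_eq
  using embM embC MB_C1 MB_C2 by blast

end


theorem lemma6p1:
  fixes h :: "real \<times> real \<Rightarrow> real" and \<rho>\<^sub>0 :: real
  defines "h\<^sub>\<rho> \<equiv> dirderiv h (1, 0)" and "h\<^sub>t \<equiv> dirderiv h (0, 1)"
  assumes smooth: "smooth_on ({0<..} \<times> UNIV) h"
    and regular: "\<And>\<rho> t. \<rho> > 0 \<Longrightarrow> h (\<rho>, t) = 0 \<Longrightarrow> (h\<^sub>\<rho> (\<rho>, t), h\<^sub>t (\<rho>, t)) \<noteq> (0, 0)"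
    and conn: "connected {(\<rho>, t). \<rho> > 0 \<and> h (\<rho>, t) = 0}"
    and rho0: "\<rho>\<^sub>0 > 0" "{\<rho>. \<rho> > 0 \<and> h (\<rho>, 0) = 0} = {\<rho>\<^sub>0}"
    and ht_zero: "{(\<rho>, t). \<rho> > 0 \<and> h (\<rho>, t) = 0 \<and> h\<^sub>t (\<rho>, t) = 0} = {(\<rho>\<^sub>0, 0)}"
    and transv: "\<And>\<rho> t. \<rho> > 0 \<Longrightarrow> h (\<rho>, t) = 0 \<Longrightarrow> \<rho> * h\<^sub>\<rho> (\<rho>, t) - t * h\<^sub>t (\<rho>, t) > 0"
    and htt: "dirderiv2 h (0, 1) (0, 1) (\<rho>\<^sub>0, 0) < 0"
  shows "morse_bott_on
           {p :: real \<times> real \<times> real \<times> real. case p of (x, y, z, t) \<Rightarrow>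
              x\<^sup>2 + y\<^sup>2 + z\<^sup>2 > 0 \<and> h (x\<^sup>2 + y\<^sup>2 + z\<^sup>2, t) = 0}
           (\<lambda>(x, y, z, t). x\<^sup>2 + y\<^sup>2)"
proof -
  have L: "L61 h \<rho>\<^sub>0"
  proof
    show "smooth_on ({0<..} \<times> UNIV) h" by (rule smooth)
    show "\<And>\<rho> t. \<rho> > 0 \<Longrightarrow> h (\<rho>, t) = 0 \<Longrightarrow> (dirderiv h (1, 0) (\<rho>, t), dirderiv h (0, 1) (\<rho>, t)) \<noteq> (0, 0)"
      using regular unfolding h\<^sub>\<rho>_def h\<^sub>t_def .
    show "\<rho>\<^sub>0 > 0" by (rule rho0(1))
    show "{\<rho>. \<rho> > 0 \<and> h (\<rho>, 0) = 0} = {\<rho>\<^sub>0}" by (rule rho0(2))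
    show "{(\<rho>, t). \<rho> > 0 \<and> h (\<rho>, t) = 0 \<and> dirderiv h (0, 1) (\<rho>, t) = 0} = {(\<rho>\<^sub>0, 0)}"
      using ht_zero unfolding h\<^sub>t_def .
    show "\<And>\<rho> t. \<rho> > 0 \<Longrightarrow> h (\<rho>, t) = 0 \<Longrightarrow> \<rho> * dirderiv h (1, 0) (\<rho>, t) - t * dirderiv h (0, 1) (\<rho>, t) > 0"
      using transv unfolding h\<^sub>\<rho>_def h\<^sub>t_def .
    show "dirderiv2 h (0, 1) (0, 1) (\<rho>\<^sub>0, 0) < 0" by (rule htt)
  qed
  interpret L61 h "\<rho>\<^sub>0" by (rule L)
  have Meq: "{p :: real \<times> real \<times> real \<times> real. case p of (x, y, z, t) \<Rightarrow>
              x\<^sup>2 + y\<^sup>2 + z\<^sup>2 > 0 \<and> h (x\<^sup>2 + y\<^sup>2 + z\<^sup>2, t) = 0} = M"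
  proof (rule set_eqI)
    fix p :: "real \<times> real \<times> real \<times> real"
    obtain x y z t where "p = (x, y, z, t)" by (cases p)
    then show "p \<in> {p. case p of (x, y, z, t) \<Rightarrow> x\<^sup>2 + y\<^sup>2 + z\<^sup>2 > 0 \<and> h (x\<^sup>2 + y\<^sup>2 + z\<^sup>2, t) = 0} \<longleftrightarrow> p \<in> M"
      by (simp add: M_4)
  qed
  have Feq: "(\<lambda>(x, y, z, t). x\<^sup>2 + y\<^sup>2) = (Ff :: real \<times> real \<times> real \<times> real \<Rightarrow> real)"
  proof
    fix p :: "real \<times> real \<times> real \<times> real"
    obtain x y z t where "p = (x, y, z, t)" by (cases p)
    then show "(case p of (x, y, z, t) \<Rightarrow> x\<^sup>2 + y\<^sup>2) = Ff p" by (simp add: Ff_def)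
  qed
  show ?thesis unfolding Meq Feq by (rule MB)
qed

end
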